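(* Let $\Delta:=\{s\in\mathbb{C}^k:\Delta(s)=0\}$ be the discriminant hypersurface; on $\mathbb{C}^k\setminus\Delta$ the matrix $P'_s(A(s))$ is invertible. Consider the system, for $\mathbb{C}^k$-valued holomorphic $\Psi$ on an open subset of $\mathbb{C}^k\setminus\Delta$, $$(-1)^{k+h}\frac{\partial\Psi}{\partial s_h}(s)=\frac{\partial(A(s)^{k-h}\Psi)}{\partial s_k}(s)+(-1)^k(k-h)A(s)^{k-h-1}P'_s(A(s))^{-1}\Psi(s)\qquad\forall h\in[1,k-1],\qquad(@@)$$ and the system $$(-1)^{k+h}\frac{\partial\Phi}{\partial s_h}(s)=\frac{\partial(A(s)^{k-h}\Phi)}{\partial s_k}(s)\qquad\forall h\in[1,k-1].\qquad(@)$$ Then: (1) for every entire function $f$, the holomorphic function $\Psi_f$ satisfies $(@@)$ on $\mathbb{C}^k\setminus\Delta$; (2) if $\Psi$ is a solution of $(@@)$, then $A(s)\Psi$ is also a solution of $(@@)$; (3) if $\Phi$ is a solution of $(@)$, then $\Psi:=P'_s(A(s))\Phi$ is a solution of $(@@)$; (4) if $\Psi$ is a solution of $(@@)$ on $\mathbb{C}^k\setminus\Delta$, then $\Phi:=P'_s(A(s))^{-1}\Psi$ is a solution of $(@)$ on $\mathbb{C}^k\setminus\Delta$.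
   Context: Fix an integer $k\ge 2$. Use coordinates $s=(s_1,\dots,s_k)$, set $s_0:=1$, $P_s(z):=\sum_{h=0}^k(-1)^hs_hz^{k-h}$, $P'_s(z):=\partial_zP_s(z)=\sum_{h=0}^{k-1}(-1)^h(k-h)s_hz^{k-h-1}$, $E(z):=(1,z,\dots,z^{k-1})^T$. $A(s)$ is the $(k,k)$ companion matrix with $A_{i,i+1}=1$ for $i\in[1,k-1]$, last row $A_{k,j}=(-1)^{k-j}s_{k+1-j}$ for $j\in[1,k]$, all other entries $0$; $P'_s(A(s)):=\sum_{h=0}^{k-1}(-1)^h(k-h)s_hA(s)^{k-h-1}$. For an entire $f$, $\Psi_f(s):=\frac{1}{2i\pi}\int_{|\zeta|=R}\frac{f(\zeta)E(\zeta)P'_s(\zeta)\,d\zeta}{P_s(\zeta)}$, with $R$ large enough that all roots of $P_s$ lie in $\{|\zeta|<R\}$. The discriminant $\Delta(s)$ is the polynomial in $s$ corresponding to $\prod_{i<j}(z_i-z_j)^2$, $z_1,\dots,z_k$ the roots of $P_s$. *)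

theory Defs
  imports "HOL-Complex_Analysis.Complex_Analysis" "HOL-Computational_Algebra.Polynomial"
begin

text \<open>Points of C^k are represented as functions nat => complex that vanish outside
  the index range 1..k (coordinates s_1,...,s_k).  The space nat => complex carries the
  product topology, so the subspace topology on Ck k is the usual topology of C^k.
  Vectors of C^k and k x k matrices are represented as nat-indexed functions, only the
  indices 1..k being relevant.\<close>

definition Ck :: "nat \<Rightarrow> (nat \<Rightarrow> complex) set" where
  "Ck k = {s. \<forall>i. i \<notin> {1..k} \<longrightarrow> s i = 0}"

definition scoef :: "(nat \<Rightarrow> complex) \<Rightarrow> nat \<Rightarrow> complex" where
  "scoef s h = (if h = 0 then 1 else s h)"

definition Ppoly :: "nat \<Rightarrow> (nat \<Rightarrow> complex) \<Rightarrow> complex poly" where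
  "Ppoly k s = (\<Sum>h\<le>k. monom ((-1)^h * scoef s h) (k - h))"

definition Pder :: "nat \<Rightarrow> (nat \<Rightarrow> complex) \<Rightarrow> complex \<Rightarrow> complex" where
  "Pder k s z = (\<Sum>h<k. (-1)^h * of_nat (k - h) * scoef s h * z ^ (k - h - 1))"

definition mmul :: "nat \<Rightarrow> (nat \<Rightarrow> nat \<Rightarrow> complex) \<Rightarrow> (nat \<Rightarrow> nat \<Rightarrow> complex) \<Rightarrow> nat \<Rightarrow> nat \<Rightarrow> complex" where
  "mmul k M N i j = (\<Sum>l=1..k. M i l * N l j)"

definition mid :: "nat \<Rightarrow> nat \<Rightarrow> complex" where
  "mid i j = (if i = j then 1 else 0)"

fun mpow :: "nat \<Rightarrow> (nat \<Rightarrow> nat \<Rightarrow> complex) \<Rightarrow> nat \<Rightarrow> nat \<Rightarrow> nat \<Rightarrow> complex" where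
  "mpow k M 0 = mid"
| "mpow k M (Suc n) = mmul k M (mpow k M n)"

definition mvec :: "nat \<Rightarrow> (nat \<Rightarrow> nat \<Rightarrow> complex) \<Rightarrow> (nat \<Rightarrow> complex) \<Rightarrow> nat \<Rightarrow> complex" where
  "mvec k M v i = (\<Sum>l=1..k. M i l * v l)"

definition is_minv :: "nat \<Rightarrow> (nat \<Rightarrow> nat \<Rightarrow> complex) \<Rightarrow> (nat \<Rightarrow> nat \<Rightarrow> complex) \<Rightarrow> bool" where
  "is_minv k M B \<longleftrightarrow> (\<forall>i\<in>{1..k}. \<forall>j\<in>{1..k}. mmul k M B i j = mid i j \<and> mmul k B M i j = mid i j)"

definition minvertible :: "nat \<Rightarrow> (nat \<Rightarrow> nat \<Rightarrow> complex) \<Rightarrow> bool" where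
  "minvertible k M \<longleftrightarrow> (\<exists>B. is_minv k M B)"

definition minv :: "nat \<Rightarrow> (nat \<Rightarrow> nat \<Rightarrow> complex) \<Rightarrow> nat \<Rightarrow> nat \<Rightarrow> complex" where
  "minv k M = (SOME B. is_minv k M B)"

definition Acomp :: "nat \<Rightarrow> (nat \<Rightarrow> complex) \<Rightarrow> nat \<Rightarrow> nat \<Rightarrow> complex" where
  "Acomp k s i j =
     (if 1 \<le> i \<and> i \<le> k - 1 \<and> j = i + 1 then 1
      else if i = k \<and> 1 \<le> j \<and> j \<le> k then (-1) ^ (k - j) * s (k + 1 - j)
      else 0)"

definition PderA :: "nat \<Rightarrow> (nat \<Rightarrow> complex) \<Rightarrow> nat \<Rightarrow> nat \<Rightarrow> complex" where
  "PderA k s i j = (\<Sum>h<k. (-1)^h * of_nat (k - h) * scoef s h * mpow k (Acomp k s) (k - h - 1) i j)"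

text \<open>Discriminant: prod_{i<j} (z_i - z_j)^2 over the roots z_1..z_k of P_s
  (listed with multiplicity; the value does not depend on the ordering).\<close>
definition discr :: "nat \<Rightarrow> (nat \<Rightarrow> complex) \<Rightarrow> complex" where
  "discr k s = (THE d. \<exists>zs. length zs = k \<and> Ppoly k s = (\<Prod>z\<leftarrow>zs. [:-z, 1:]) \<and>
       d = (\<Prod>(i, j)\<in>{(i, j). i < j \<and> j < k}. (zs ! i - zs ! j) ^ 2))"

definition DiscSet :: "nat \<Rightarrow> (nat \<Rightarrow> complex) set" where
  "DiscSet k = {s \<in> Ck k. discr k s = 0}"

definition pdiff :: "nat \<Rightarrow> ((nat \<Rightarrow> complex) \<Rightarrow> complex) \<Rightarrow> (nat \<Rightarrow> complex) \<Rightarrow> complex" where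
  "pdiff j F s = deriv (\<lambda>t. F (s(j := t))) (s j)"

text \<open>Holomorphy on an open subset U of C^k: continuous and holomorphic in each
  variable separately (equivalent to holomorphy by Osgood's lemma).\<close>
definition holo_k :: "nat \<Rightarrow> (nat \<Rightarrow> complex) set \<Rightarrow> ((nat \<Rightarrow> complex) \<Rightarrow> complex) \<Rightarrow> bool" where
  "holo_k k U F \<longleftrightarrow> continuous_on U F \<and>
     (\<forall>s\<in>U. \<forall>j\<in>{1..k}. (\<lambda>t. F (s(j := t))) field_differentiable (at (s j)))"

definition admissible :: "nat \<Rightarrow> (nat \<Rightarrow> complex) set \<Rightarrow> bool" where
  "admissible k U \<longleftrightarrow> U \<subseteq> Ck k - DiscSet k \<and> openin (top_of_set (Ck k)) U"

definition sol_AA :: "nat \<Rightarrow> (nat \<Rightarrow> complex) set \<Rightarrow> ((nat \<Rightarrow> complex) \<Rightarrow> nat \<Rightarrow> complex) \<Rightarrow> bool" where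
  "sol_AA k U Psi \<longleftrightarrow> admissible k U \<and> (\<forall>i\<in>{1..k}. holo_k k U (\<lambda>s. Psi s i)) \<and>
     (\<forall>s\<in>U. \<forall>h\<in>{1..k-1}. \<forall>i\<in>{1..k}.
        (-1) ^ (k + h) * pdiff h (\<lambda>t. Psi t i) s =
          pdiff k (\<lambda>t. mvec k (mpow k (Acomp k t) (k - h)) (Psi t) i) s
          + (-1) ^ k * of_nat (k - h) *
            mvec k (mmul k (mpow k (Acomp k s) (k - h - 1)) (minv k (PderA k s))) (Psi s) i)"

definition sol_A :: "nat \<Rightarrow> (nat \<Rightarrow> complex) set \<Rightarrow> ((nat \<Rightarrow> complex) \<Rightarrow> nat \<Rightarrow> complex) \<Rightarrow> bool" where
  "sol_A k U Phi \<longleftrightarrow> admissible k U \<and> (\<forall>i\<in>{1..k}. holo_k k U (\<lambda>s. Phi s i)) \<and>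
     (\<forall>s\<in>U. \<forall>h\<in>{1..k-1}. \<forall>i\<in>{1..k}.
        (-1) ^ (k + h) * pdiff h (\<lambda>t. Phi t i) s =
          pdiff k (\<lambda>t. mvec k (mpow k (Acomp k t) (k - h)) (Phi t) i) s)"

text \<open>Psi_f(s), component i (i = 1..k), E(z)_i = z^(i-1); the circle radius R is any
  radius exceeding the moduli of all roots of P_s.\<close>
definition PsiF :: "nat \<Rightarrow> (complex \<Rightarrow> complex) \<Rightarrow> (nat \<Rightarrow> complex) \<Rightarrow> nat \<Rightarrow> complex" where
  "PsiF k f s i =
     contour_integral
       (circlepath 0 (SOME R. R > 0 \<and> (\<forall>z. poly (Ppoly k s) z = 0 \<longrightarrow> cmod z < R)))
       (\<lambda>\<zeta>. f \<zeta> * \<zeta> ^ (i - 1) * Pder k s \<zeta> / poly (Ppoly k s) \<zeta>) / (2 * pi * \<i>)"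

end

theory Submission
  imports Defs "Jordan_Normal_Form.Determinant" "HOL-Computational_Algebra.Fundamental_Theorem_Algebra"
    "HOL-Combinatorics.Permutations" "HOL-Computational_Algebra.Field_as_Ring" "HOL-Computational_Algebra.Polynomial_Factorial"
begin

lemma mmul_assoc: "mmul k (mmul k M N) P = mmul k M (mmul k N P)"
proof (intro ext)
  fix i j
  show "mmul k (mmul k M N) P i j = mmul k M (mmul k N P) i j"
    unfolding mmul_def sum_distrib_left sum_distrib_right
    by (subst sum.swap) (simp add: mult.assoc)
qed

lemma mvec_mmul: "mvec k (mmul k M N) v = mvec k M (mvec k N v)"
proof (intro ext)
  fix i
  show "mvec k (mmul k M N) v i = mvec k M (mvec k N v) i"
    unfolding mvec_def mmul_def sum_distrib_left sum_distrib_right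
    by (subst sum.swap) (simp add: mult.assoc)
qed

lemma mmul_mid_l: "i \<in> {1..k} \<Longrightarrow> mmul k mid M i j = M i j"
proof -
  assume i: "i \<in> {1..k}"
  have "mmul k mid M i j = (\<Sum>l\<in>{1..k}. if i = l then M l j else 0)"
    unfolding mmul_def mid_def by (intro sum.cong) auto
  then show ?thesis using i by simp
qed

lemma mmul_mid_r: "j \<in> {1..k} \<Longrightarrow> mmul k M mid i j = M i j"
proof -
  assume j: "j \<in> {1..k}"
  have "mmul k M mid i j = (\<Sum>l\<in>{1..k}. if l = j then M i l else 0)"
    unfolding mmul_def mid_def by (intro sum.cong) auto
  then show ?thesis using j by simp
qed

lemma mvec_mid: "i \<in> {1..k} \<Longrightarrow> mvec k mid v i = v i"
proof -
  assume i: "i \<in> {1..k}"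
  have "mvec k mid v i = (\<Sum>l\<in>{1..k}. if i = l then v l else 0)"
    unfolding mvec_def mid_def by (intro sum.cong) auto
  then show ?thesis using i by simp
qed

lemma mmul_cong:
  assumes "\<And>l. l \<in> {1..k} \<Longrightarrow> M i l = M' i l" "\<And>l. l \<in> {1..k} \<Longrightarrow> N l j = N' l j"
  shows "mmul k M N i j = mmul k M' N' i j"
  unfolding mmul_def using assms by (intro sum.cong) auto

lemma mvec_cong:
  assumes "\<And>l. l \<in> {1..k} \<Longrightarrow> M i l = M' i l" "\<And>l. l \<in> {1..k} \<Longrightarrow> v l = v' l"
  shows "mvec k M v i = mvec k M' v' i"
  unfolding mvec_def using assms by (intro sum.cong) auto

lemma mpow_add: "i \<in> {1..k} \<Longrightarrow> mmul k (mpow k M a) (mpow k M b) i j = mpow k M (a+b) i j"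
proof (induction a arbitrary: i)
  case 0
  then show ?case by (simp add: mmul_mid_l)
next
  case (Suc a)
  have "mmul k (mpow k M (Suc a)) (mpow k M b) i j = mmul k M (mmul k (mpow k M a) (mpow k M b)) i j"
    by (simp add: mmul_assoc)
  also have "\<dots> = mmul k M (mpow k M (a+b)) i j"
    by (rule mmul_cong) (use Suc.IH in auto)
  finally show ?case by simp
qed

lemma mpow_comm: "i \<in> {1..k} \<Longrightarrow> mmul k (mpow k M a) (mpow k M b) i j = mmul k (mpow k M b) (mpow k M a) i j"
  by (simp add: mpow_add add.commute)

lemma mpow_one: "j \<in> {1..k} \<Longrightarrow> mpow k M 1 i j = M i j"
  by (simp add: mmul_mid_r)

lemma mpow_comm1: "i \<in> {1..k} \<Longrightarrow> j \<in> {1..k} \<Longrightarrow> mmul k M (mpow k M n) i j = mmul k (mpow k M n) M i j"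
proof -
  assume i: "i \<in> {1..k}" and j: "j \<in> {1..k}"
  have "mmul k M (mpow k M n) i j = mpow k M (n+1) i j" by simp
  also have "\<dots> = mmul k (mpow k M n) (mpow k M 1) i j" by (rule mpow_add[OF i, symmetric])
  also have "\<dots> = mmul k (mpow k M n) M i j" by (rule mmul_cong) (use j mpow_one in auto)
  finally show ?thesis .
qed

lemma mmul_lin_l: "mmul k (\<lambda>i j. \<Sum>m\<in>S. c m * X m i j) N i j = (\<Sum>m\<in>S. c m * mmul k (X m) N i j)"
  unfolding mmul_def sum_distrib_right sum_distrib_left
  by (subst sum.swap) (simp add: mult.assoc)

lemma mmul_lin_r: "mmul k N (\<lambda>i j. \<Sum>m\<in>S. c m * X m i j) i j = (\<Sum>m\<in>S. c m * mmul k N (X m) i j)"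
  unfolding mmul_def sum_distrib_right sum_distrib_left
  by (subst sum.swap) (simp add: mult.assoc mult.left_commute)

lemma mvec_lin: "mvec k (\<lambda>i j. \<Sum>m\<in>S. c m * X m i j) v i = (\<Sum>m\<in>S. c m * mvec k (X m) v i)"
  unfolding mvec_def sum_distrib_right sum_distrib_left
  by (subst sum.swap) (simp add: mult.assoc)

lemma polyA_comm:
  assumes "i \<in> {1..k}" "j \<in> {1..k}"
  shows "mmul k (\<lambda>i j. \<Sum>m\<in>S. c m * mpow k M (e m) i j) (mpow k M n) i j
       = mmul k (mpow k M n) (\<lambda>i j. \<Sum>m\<in>S. c m * mpow k M (e m) i j) i j"
  unfolding mmul_lin_l mmul_lin_r using mpow_comm[OF assms(1)] by simp

lemma PderA_poly: "PderA k s = (\<lambda>i j. \<Sum>h<k. ((-1)^h * of_nat (k - h) * scoef s h) * mpow k (Acomp k s) (k - h - 1) i j)"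
  unfolding PderA_def by simp

lemma PderA_comm:
  assumes "i \<in> {1..k}" "j \<in> {1..k}"
  shows "mmul k (PderA k s) (mpow k (Acomp k s) n) i j = mmul k (mpow k (Acomp k s) n) (PderA k s) i j"
  unfolding PderA_poly by (rule polyA_comm[OF assms])

lemma is_minv_unique:
  assumes "is_minv k M C" "is_minv k M C'" "i \<in> {1..k}" "j \<in> {1..k}"
  shows "C i j = C' i j"
proof -
  have "C i j = mmul k C mid i j" using assms by (simp add: mmul_mid_r)
  also have "\<dots> = mmul k C (mmul k M C') i j"
    by (rule mmul_cong) (use assms in \<open>auto simp: is_minv_def\<close>)
  also have "\<dots> = mmul k (mmul k C M) C' i j" by (simp add: mmul_assoc)
  also have "\<dots> = mmul k mid C' i j"
    by (rule mmul_cong) (use assms in \<open>auto simp: is_minv_def\<close>)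
  also have "\<dots> = C' i j" using assms by (simp add: mmul_mid_l)
  finally show ?thesis .
qed

lemma minv_is: "minvertible k M \<Longrightarrow> is_minv k M (minv k M)"
  by (metis minvertible_def minv_def someI_ex)

lemma minv_comm:
  assumes inv: "is_minv k M C"
    and comm: "\<And>i j. i \<in> {1..k} \<Longrightarrow> j \<in> {1..k} \<Longrightarrow> mmul k M N i j = mmul k N M i j"
    and ij: "i \<in> {1..k}" "j \<in> {1..k}"
  shows "mmul k C N i j = mmul k N C i j"
proof -
  have MC: "\<And>a b. a \<in> {1..k} \<Longrightarrow> b \<in> {1..k} \<Longrightarrow> mmul k M C a b = mid a b"
   and CM: "\<And>a b. a \<in> {1..k} \<Longrightarrow> b \<in> {1..k} \<Longrightarrow> mmul k C M a b = mid a b"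
    using inv by (auto simp: is_minv_def)
  have "mmul k C N i j = mmul k (mmul k C N) mid i j" using ij by (simp add: mmul_mid_r)
  also have "\<dots> = mmul k (mmul k C N) (mmul k M C) i j"
    by (rule mmul_cong) (use ij MC in auto)
  also have "\<dots> = mmul k C (mmul k (mmul k N M) C) i j" by (simp add: mmul_assoc)
  also have "\<dots> = mmul k C (mmul k (mmul k M N) C) i j"
    by (rule mmul_cong[OF refl]) (rule mmul_cong, use comm in auto)
  also have "\<dots> = mmul k (mmul k C M) (mmul k N C) i j" by (simp add: mmul_assoc)
  also have "\<dots> = mmul k mid (mmul k N C) i j"
    by (rule mmul_cong) (use ij CM in auto)
  also have "\<dots> = mmul k N C i j" using ij by (simp add: mmul_mid_l)
  finally show ?thesis .
qed

lemma Acomp_row: "i \<in> {1..k-1} \<Longrightarrow> Acomp k s i l = (if l = i + 1 then 1 else 0)"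
  unfolding Acomp_def by auto

lemma Acomp_last: "k \<ge> 2 \<Longrightarrow> Acomp k s k l = (if 1 \<le> l \<and> l \<le> k then (-1)^(k-l) * s (k+1-l) else 0)"
  unfolding Acomp_def by auto

lemma mpow_row:
  assumes "k \<ge> 2" "i \<in> {1..k}" "i + m \<le> k" "l \<in> {1..k}"
  shows "mpow k (Acomp k s) m i l = (if l = i + m then 1 else 0)"
  using assms(2-4)
proof (induction m arbitrary: i)
  case 0
  then show ?case by (simp add: mid_def)
next
  case (Suc m)
  have i: "i \<in> {1..k-1}" using Suc.prems by auto
  have "mpow k (Acomp k s) (Suc m) i l = (\<Sum>l'\<in>{1..k}. (if l' = i + 1 then 1 else 0) * mpow k (Acomp k s) m l' l)"
    by (simp add: mmul_def Acomp_row[OF i])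
  also have "\<dots> = (\<Sum>l'\<in>{1..k}. if l' = i + 1 then mpow k (Acomp k s) m l' l else 0)"
    by (intro sum.cong) auto
  also have "\<dots> = mpow k (Acomp k s) m (i+1) l"
  proof -
    have "i + 1 \<in> {1..k}" using i by auto
    then show ?thesis by simp
  qed
  also have "\<dots> = (if l = i + 1 + m then 1 else 0)" using Suc.prems by (intro Suc.IH) auto
  finally show ?case by simp
qed

lemma poly_Ppoly: "poly (Ppoly k s) z = (\<Sum>h\<le>k. (-1)^h * scoef s h * z^(k-h))"
  by (simp add: Ppoly_def poly_sum poly_monom)

lemma poly_Ppoly_split: "poly (Ppoly k s) z = z^k + (\<Sum>h=1..k. (-1)^h * s h * z^(k-h))"
proof -
  have "poly (Ppoly k s) z = (\<Sum>h=0..k. (-1)^h * scoef s h * z^(k-h))"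
    by (simp add: poly_Ppoly atMost_atLeast0)
  also have "\<dots> = z^k + (\<Sum>h=Suc 0..k. (-1)^h * scoef s h * z^(k-h))"
    by (subst sum.atLeast_Suc_atMost) (auto simp: scoef_def)
  also have "(\<Sum>h=Suc 0..k. (-1)^h * scoef s h * z^(k-h)) = (\<Sum>h=1..k. (-1)^h * s h * z^(k-h))"
    by (intro sum.cong) (auto simp: scoef_def)
  finally show ?thesis by simp
qed

lemma lastrow_sum:
  "(\<Sum>l=1..k. (-1)^(k-l) * s (k+1-l) * z^(l-1)) = z^k - poly (Ppoly k s) z"
proof -
  have "(\<Sum>l=1..k. (-1)^(k-l) * s (k+1-l) * z^(l-1)) = (\<Sum>h=1..k. (-1)^(h-1) * s h * z^(k-h))"
    by (rule sum.reindex_bij_witness[of _ "\<lambda>h. k+1-h" "\<lambda>l. k+1-l"])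
       (auto simp: Suc_diff_le)
  also have "\<dots> = - (\<Sum>h=1..k. (-1)^h * s h * z^(k-h))"
    unfolding sum_negf[symmetric]
  proof (intro sum.cong refl)
    fix h assume "h \<in> {1..k}"
    then obtain h' where "h = Suc h'" by (cases h) auto
    then show "(-1)^(h-1) * s h * z^(k-h) = - ((-1)^h * s h * z^(k-h))" by simp
  qed
  finally show ?thesis by (simp add: poly_Ppoly_split)
qed

lemma A_Ev:
  assumes "k \<ge> 2" "i \<in> {1..k}"
  shows "mvec k (Acomp k s) (\<lambda>l. z^(l-1)) i = z * z^(i-1) - (if i = k then poly (Ppoly k s) z else 0)"
proof (cases "i = k")
  case True
  have "mvec k (Acomp k s) (\<lambda>l. z^(l-1)) i = (\<Sum>l=1..k. (-1)^(k-l) * s (k+1-l) * z^(l-1))"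
    unfolding mvec_def True using assms by (intro sum.cong) (auto simp: Acomp_last)
  also have "\<dots> = z^k - poly (Ppoly k s) z" by (rule lastrow_sum)
  also have "z^k = z * z^(i-1)" using True assms by (cases k) auto
  finally show ?thesis using True by simp
next
  case False
  then have i: "i \<in> {1..k-1}" using assms by auto
  have "mvec k (Acomp k s) (\<lambda>l. z^(l-1)) i = (\<Sum>l\<in>{1..k}. if l = i + 1 then z^(l-1) else 0)"
    unfolding mvec_def by (intro sum.cong) (auto simp: Acomp_row[OF i])
  also have "\<dots> = z^i" using i by auto
  also have "z^i = z * z^(i-1)" using i by (cases i) auto
  finally show ?thesis using False by simp
qed

lemma mvec_lin2: "mvec k M (\<lambda>l. a * u l - b * w l) i = a * mvec k M u i - b * mvec k M w i"
  unfolding mvec_def by (simp add: sum_subtractf sum_distrib_left algebra_simps)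

lemma powA_Ev:
  assumes "k \<ge> 2"
  shows "\<exists>W. (\<forall>l. W l holomorphic_on UNIV) \<and> (\<forall>z. \<forall>i\<in>{1..k}.
    mvec k (mpow k (Acomp k s) n) (\<lambda>l. z^(l-1)) i = z^n * z^(i-1) - poly (Ppoly k s) z * W i z)"
proof (induction n)
  case 0
  show ?case by (rule exI[of _ "\<lambda>l z. 0"]) (auto simp: mvec_mid)
next
  case (Suc n)
  then obtain W where W: "\<And>l. W l holomorphic_on UNIV"
    "\<And>z i. i \<in> {1..k} \<Longrightarrow> mvec k (mpow k (Acomp k s) n) (\<lambda>l. z^(l-1)) i = z^n * z^(i-1) - poly (Ppoly k s) z * W i z"
    by blast
  define W' where "W' = (\<lambda>i z. (if i = k then z^n else 0) + mvec k (Acomp k s) (\<lambda>l. W l z) i)"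
  show ?case
  proof (intro exI conjI allI ballI)
    fix l show "W' l holomorphic_on UNIV"
      unfolding W'_def mvec_def using W(1) by (cases "l = k") (auto intro!: holomorphic_intros)
  next
    fix z i assume i: "i \<in> {1..k}"
    have "mvec k (mpow k (Acomp k s) (Suc n)) (\<lambda>l. z^(l-1)) i
        = mvec k (Acomp k s) (mvec k (mpow k (Acomp k s) n) (\<lambda>l. z^(l-1))) i"
      by (simp add: mvec_mmul)
    also have "\<dots> = mvec k (Acomp k s) (\<lambda>l. z^n * z^(l-1) - poly (Ppoly k s) z * W l z) i"
      by (intro mvec_cong refl W(2))
    also have "\<dots> = z^n * mvec k (Acomp k s) (\<lambda>l. z^(l-1)) i - poly (Ppoly k s) z * mvec k (Acomp k s) (\<lambda>l. W l z) i"
      by (rule mvec_lin2)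
    also have "\<dots> = z^(Suc n) * z^(i-1) - poly (Ppoly k s) z * W' i z"
      unfolding A_Ev[OF assms i] W'_def by (simp add: algebra_simps)
    finally show "mvec k (mpow k (Acomp k s) (Suc n)) (\<lambda>l. z^(l-1)) i = z^(Suc n) * z^(i-1) - poly (Ppoly k s) z * W' i z" .
  qed
qed

lemma powA_Ev_all:
  assumes "k \<ge> 2"
  obtains W where "\<And>n l. W n l holomorphic_on UNIV"
    "\<And>n z i. i \<in> {1..k} \<Longrightarrow> mvec k (mpow k (Acomp k s) n) (\<lambda>l. z^(l-1)) i = z^n * z^(i-1) - poly (Ppoly k s) z * W n i z"
proof -
  have "\<forall>n. \<exists>W. (\<forall>l. W l holomorphic_on UNIV) \<and> (\<forall>z. \<forall>i\<in>{1..k}.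
    mvec k (mpow k (Acomp k s) n) (\<lambda>l. z^(l-1)) i = z^n * z^(i-1) - poly (Ppoly k s) z * W i z)"
    using powA_Ev[OF assms] by blast
  then obtain W where "\<forall>n. (\<forall>l. W n l holomorphic_on UNIV) \<and> (\<forall>z. \<forall>i\<in>{1..k}.
    mvec k (mpow k (Acomp k s) n) (\<lambda>l. z^(l-1)) i = z^n * z^(i-1) - poly (Ppoly k s) z * W n i z)"
    by metis
  then show ?thesis using that by blast
qed

lemma PderA_Ev:
  assumes "k \<ge> 2"
  obtains W where "\<And>l. W l holomorphic_on UNIV"
    "\<And>z i. i \<in> {1..k} \<Longrightarrow> mvec k (PderA k s) (\<lambda>l. z^(l-1)) i = Pder k s z * z^(i-1) - poly (Ppoly k s) z * W i z"
proof -
  obtain Wn where Wn: "\<And>n l. Wn n l holomorphic_on UNIV"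
    "\<And>n z i. i \<in> {1..k} \<Longrightarrow> mvec k (mpow k (Acomp k s) n) (\<lambda>l. z^(l-1)) i = z^n * z^(i-1) - poly (Ppoly k s) z * Wn n i z"
    using powA_Ev_all[OF assms] by blast
  define W where "W = (\<lambda>i z. \<Sum>h<k. ((-1)^h * of_nat (k - h) * scoef s h) * Wn (k-h-1) i z)"
  show ?thesis
  proof (rule that)
    fix l show "W l holomorphic_on UNIV" unfolding W_def using Wn(1) by (intro holomorphic_intros) auto
  next
    fix z i assume i: "i \<in> {1..k}"
    have "mvec k (PderA k s) (\<lambda>l. z^(l-1)) i = (\<Sum>h<k. ((-1)^h * of_nat (k - h) * scoef s h) *
        mvec k (mpow k (Acomp k s) (k-h-1)) (\<lambda>l. z^(l-1)) i)"
      unfolding PderA_poly by (rule mvec_lin)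
    also have "\<dots> = (\<Sum>h<k. ((-1)^h * of_nat (k - h) * scoef s h) *
        (z^(k-h-1) * z^(i-1) - poly (Ppoly k s) z * Wn (k-h-1) i z))"
      using Wn(2)[OF i] by simp
    also have "\<dots> = (\<Sum>h<k. ((-1)^h * of_nat (k - h) * scoef s h) * z^(k-h-1) * z^(i-1))
         - (\<Sum>h<k. poly (Ppoly k s) z * (((-1)^h * of_nat (k - h) * scoef s h) * Wn (k-h-1) i z))"
      unfolding right_diff_distrib sum_subtractf by (simp only: mult_ac)
    also have "\<dots> = Pder k s z * z^(i-1) - poly (Ppoly k s) z * W i z"
      unfolding Pder_def W_def sum_distrib_left sum_distrib_right by (simp only: mult_ac)
    finally show "mvec k (PderA k s) (\<lambda>l. z^(l-1)) i = Pder k s z * z^(i-1) - poly (Ppoly k s) z * W i z" .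
  qed
qed

lemma PderA_eigen:
  assumes "k \<ge> 2" "poly (Ppoly k s) z = 0" "i \<in> {1..k}"
  shows "mvec k (PderA k s) (\<lambda>l. z^(l-1)) i = Pder k s z * z^(i-1)"
proof -
  obtain W where "\<And>z i. i \<in> {1..k} \<Longrightarrow> mvec k (PderA k s) (\<lambda>l. z^(l-1)) i = Pder k s z * z^(i-1) - poly (Ppoly k s) z * W i z"
    using PderA_Ev[OF assms(1)] by blast
  then show ?thesis using assms by simp
qed

lemma double_root_singular:
  assumes "k \<ge> 2" "poly (Ppoly k s) z = 0" "Pder k s z = 0"
  shows "\<not> minvertible k (PderA k s)"
proof
  assume "minvertible k (PderA k s)"
  then obtain C where C: "is_minv k (PderA k s) C" unfolding minvertible_def by blast
  have one: "1 \<in> {1..k}" using assms by auto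
  have "(1::complex) = mvec k mid (\<lambda>l. z^(l-1)) 1" using mvec_mid[OF one] by simp
  also have "\<dots> = mvec k (mmul k C (PderA k s)) (\<lambda>l. z^(l-1)) 1"
    by (rule mvec_cong) (use C one in \<open>auto simp: is_minv_def\<close>)
  also have "\<dots> = mvec k C (mvec k (PderA k s) (\<lambda>l. z^(l-1))) 1" by (simp add: mvec_mmul)
  also have "\<dots> = mvec k C (\<lambda>l. 0) 1"
    by (intro mvec_cong refl) (metis PderA_eigen[OF assms(1,2)] assms(3) mult_zero_left)
  also have "\<dots> = 0" by (simp add: mvec_def)
  finally show False by simp
qed

definition pe :: "nat \<Rightarrow> (nat \<Rightarrow> complex) \<Rightarrow> nat \<Rightarrow> complex poly \<Rightarrow> nat \<Rightarrow> nat \<Rightarrow> complex" where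
  "pe k s N q = (\<lambda>i j. \<Sum>n<N. coeff q n * mpow k (Acomp k s) n i j)"

definition peval :: "nat \<Rightarrow> (nat \<Rightarrow> complex) \<Rightarrow> complex poly \<Rightarrow> nat \<Rightarrow> nat \<Rightarrow> complex" where
  "peval k s q = pe k s (Suc (degree q)) q"

lemma pe_eq: "degree q < N \<Longrightarrow> pe k s N q = peval k s q"
proof -
  assume N: "degree q < N"
  show ?thesis unfolding peval_def pe_def
  proof (intro ext)
    fix i j
    show "(\<Sum>n<N. coeff q n * mpow k (Acomp k s) n i j) = (\<Sum>n<Suc (degree q). coeff q n * mpow k (Acomp k s) n i j)"
      using N by (intro sum.mono_neutral_right) (auto simp: coeff_eq_0)
  qed
qed

lemma mmul_add_l: "mmul k (\<lambda>i j. X i j + Y i j) N i j = mmul k X N i j + mmul k Y N i j"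
  unfolding mmul_def by (simp add: algebra_simps sum.distrib)

lemma mmul_smult_l: "mmul k (\<lambda>i j. a * X i j) N i j = a * mmul k X N i j"
  unfolding mmul_def by (simp add: algebra_simps sum_distrib_left)

lemma mmul_zero_l: "mmul k (\<lambda>i j. 0) N i j = 0"
  unfolding mmul_def by simp

lemma peval_add: "peval k s (p + q) i j = peval k s p i j + peval k s q i j"
proof -
  define N where "N = Suc (max (degree p) (degree q))"
  have "peval k s (p + q) = pe k s N (p + q)"
    using degree_add_le_max[of p q] by (intro pe_eq[symmetric]) (auto simp: N_def)
  moreover have "peval k s p = pe k s N p" "peval k s q = pe k s N q"
    by (auto intro!: pe_eq[symmetric] simp: N_def)
  ultimately show ?thesis by (simp add: pe_def algebra_simps sum.distrib)
qed

lemma peval_smult: "peval k s (Polynomial.smult a q) i j = a * peval k s q i j"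
proof -
  have "peval k s (Polynomial.smult a q) = pe k s (Suc (degree q)) (Polynomial.smult a q)"
    using degree_smult_le[of a q] by (intro pe_eq[symmetric]) auto
  then have "peval k s (Polynomial.smult a q) i j = pe k s (Suc (degree q)) (Polynomial.smult a q) i j" by simp
  also have "\<dots> = a * pe k s (Suc (degree q)) q i j" by (simp add: pe_def sum_distrib_left mult.assoc del: sum.lessThan_Suc)
  also have "\<dots> = a * peval k s q i j" by (simp add: peval_def)
  finally show ?thesis .
qed

lemma peval_zero: "peval k s 0 i j = 0"
  by (simp add: peval_def pe_def)

lemma peval_pCons: "peval k s (pCons a q) i j = a * mid i j + mmul k (Acomp k s) (peval k s q) i j"
proof -
  have "peval k s (pCons a q) = pe k s (Suc (Suc (degree q))) (pCons a q)"
    using degree_pCons_le[of a q] by (intro pe_eq[symmetric]) auto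
  then have "peval k s (pCons a q) i j = a * mid i j +
      (\<Sum>n<Suc (degree q). coeff q n * mmul k (Acomp k s) (mpow k (Acomp k s) n) i j)"
    by (simp add: pe_def sum.lessThan_Suc_shift del: sum.lessThan_Suc)
  also have "(\<Sum>n<Suc (degree q). coeff q n * mmul k (Acomp k s) (mpow k (Acomp k s) n) i j)
      = mmul k (Acomp k s) (peval k s q) i j"
    unfolding peval_def pe_def by (rule mmul_lin_r[symmetric])
  finally show ?thesis .
qed

lemma peval_mult: "i \<in> {1..k} \<Longrightarrow> peval k s (p * q) i j = mmul k (peval k s p) (peval k s q) i j"
proof (induction p arbitrary: i rule: pCons_induct)
  case 0
  then show ?case by (simp add: peval_zero mmul_def)
next
  case (pCons a p)
  have "peval k s (pCons a p * q) i j = a * peval k s q i j + (0 * mid i j + mmul k (Acomp k s) (peval k s (p * q)) i j)"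
    by (simp add: peval_add peval_smult peval_pCons)
  also have "mmul k (Acomp k s) (peval k s (p * q)) i j = mmul k (Acomp k s) (mmul k (peval k s p) (peval k s q)) i j"
    by (rule mmul_cong) (use pCons.IH in auto)
  also have "\<dots> = mmul k (mmul k (Acomp k s) (peval k s p)) (peval k s q) i j"
    by (simp add: mmul_assoc)
  also have "a * peval k s q i j = a * mmul k mid (peval k s q) i j"
    using pCons.prems by (simp add: mmul_mid_l)
  also have "a * mmul k mid (peval k s q) i j + (0 * mid i j + mmul k (mmul k (Acomp k s) (peval k s p)) (peval k s q) i j)
      = mmul k (\<lambda>i j. a * mid i j + mmul k (Acomp k s) (peval k s p) i j) (peval k s q) i j"
    by (simp add: mmul_add_l mmul_smult_l)
  also have "\<dots> = mmul k (peval k s (pCons a p)) (peval k s q) i j"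
    by (rule mmul_cong) (auto simp: peval_pCons)
  finally show ?case .
qed

lemma peval_comm: "i \<in> {1..k} \<Longrightarrow> mmul k (peval k s p) (peval k s q) i j = mmul k (peval k s q) (peval k s p) i j"
  by (metis peval_mult mult.commute)

lemma peval_monom: "peval k s (monom c n) i j = c * mpow k (Acomp k s) n i j"
proof -
  have "peval k s (monom c n) = pe k s (Suc n) (monom c n)"
    using degree_monom_le[of c n] by (intro pe_eq[symmetric]) auto
  then show ?thesis by (simp add: pe_def)
qed

lemma peval_sum: "finite S \<Longrightarrow> peval k s (\<Sum>h\<in>S. p h) i j = (\<Sum>h\<in>S. peval k s (p h) i j)"
  by (induction S rule: finite_induct) (auto simp: peval_zero peval_add)

lemma peval_one: "peval k s 1 i j = mid i j"
  by (simp add: one_pCons peval_pCons peval_zero mmul_def del: pCons_one)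

definition Qd :: "nat \<Rightarrow> (nat \<Rightarrow> complex) \<Rightarrow> complex poly" where
  "Qd k s = (\<Sum>h<k. monom ((-1)^h * of_nat (k - h) * scoef s h) (k - h - 1))"

lemma peval_Qd: "peval k s (Qd k s) i j = PderA k s i j"
  unfolding Qd_def PderA_def by (simp add: peval_sum peval_monom)

lemma pderiv_Ppoly: "pderiv (Ppoly k s) = Qd k s"
proof -
  have "pderiv (Ppoly k s) = (\<Sum>h\<le>k. monom (of_nat (k-h) * ((-1)^h * scoef s h)) (k - h - 1))"
    unfolding Ppoly_def using higher_pderiv_sum[of 1 "\<lambda>h. monom ((-1)^h * scoef s h) (k - h)" "{..k}"]
    by (simp add: pderiv_monom)
  also have "\<dots> = (\<Sum>h<k. monom (of_nat (k-h) * ((-1)^h * scoef s h)) (k - h - 1))"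
    by (simp add: lessThan_Suc_atMost[symmetric])
  also have "\<dots> = Qd k s" unfolding Qd_def by (simp add: mult_ac)
  finally show ?thesis .
qed

lemma Pder_poly: "Pder k s z = poly (pderiv (Ppoly k s)) z"
  unfolding pderiv_Ppoly Qd_def Pder_def by (simp add: poly_sum poly_monom)

lemma coeff_Ppoly: "coeff (Ppoly k s) n = (if n \<le> k then (-1)^(k-n) * scoef s (k-n) else 0)"
proof -
  have "coeff (Ppoly k s) n = (\<Sum>h\<le>k. if k - h = n then (-1)^h * scoef s h else 0)"
    unfolding Ppoly_def coeff_sum by simp
  also have "\<dots> = (\<Sum>h\<le>k. if h = k - n \<and> n \<le> k then (-1)^h * scoef s h else 0)"
    by (intro sum.cong) auto
  also have "\<dots> = (if n \<le> k then (-1)^(k-n) * scoef s (k-n) else 0)"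
    by (cases "n \<le> k") auto
  finally show ?thesis .
qed

lemma degree_Ppoly: "degree (Ppoly k s) = k"
proof (rule antisym)
  show "degree (Ppoly k s) \<le> k" by (rule degree_le) (auto simp: coeff_Ppoly)
  show "k \<le> degree (Ppoly k s)" by (rule le_degree) (simp add: coeff_Ppoly scoef_def)
qed

lemma lead_Ppoly: "lead_coeff (Ppoly k s) = 1"
  by (simp add: degree_Ppoly coeff_Ppoly scoef_def)

lemma Ppoly_nz: "Ppoly k s \<noteq> 0"
proof
  assume "Ppoly k s = 0"
  then have "lead_coeff (Ppoly k s) = 0" by simp
  with lead_Ppoly[of k s] show False by simp
qed

lemma peval_mpow_comm:
  assumes "a \<in> {1..k}" "b \<in> {1..k}"
  shows "mmul k (peval k s q) (mpow k (Acomp k s) m) a b = mmul k (mpow k (Acomp k s) m) (peval k s q) a b"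
  unfolding peval_def pe_def using polyA_comm[OF assms, where c="\<lambda>n. coeff q n" and e="\<lambda>n. n"] by (simp del: sum.lessThan_Suc)

lemma CH_row1:
  assumes k: "k \<ge> 2" and j: "j \<in> {1..k}"
  shows "peval k s (Ppoly k s) 1 j = 0"
proof -
  let ?A = "Acomp k s"
  have one: "1 \<in> {1..k}" using k by auto
  have "peval k s (Ppoly k s) 1 j = (\<Sum>n<Suc k. coeff (Ppoly k s) n * mpow k ?A n 1 j)"
    by (simp add: peval_def pe_def degree_Ppoly)
  also have "\<dots> = (\<Sum>n<k. coeff (Ppoly k s) n * mpow k ?A n 1 j) + coeff (Ppoly k s) k * mpow k ?A k 1 j"
    by simp
  also have "(\<Sum>n<k. coeff (Ppoly k s) n * mpow k ?A n 1 j) = (\<Sum>n<k. if n = j - 1 then coeff (Ppoly k s) n else 0)"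
  proof (intro sum.cong refl)
    fix n assume "n \<in> {..<k}"
    then show "coeff (Ppoly k s) n * mpow k ?A n 1 j = (if n = j - 1 then coeff (Ppoly k s) n else 0)"
      using mpow_row[OF k one, of n j s] j by auto
  qed
  also have "\<dots> = coeff (Ppoly k s) (j - 1)" using j by auto
  also have "\<dots> = (-1)^(Suc (k-j)) * s (k+1-j)"
    using j by (auto simp: coeff_Ppoly scoef_def Suc_diff_le)
  also have "mpow k ?A k 1 j = (-1)^(k-j) * s (k+1-j)"
  proof -
    obtain k' where kk: "k = Suc k'" using k by (cases k) auto
    have "mpow k ?A k 1 j = mmul k ?A (mpow k ?A k') 1 j" by (simp add: kk)
    also have "\<dots> = mmul k (mpow k ?A k') ?A 1 j" by (rule mpow_comm1[OF one j])
    also have "\<dots> = (\<Sum>l\<in>{1..k}. if l = k then ?A l j else 0)"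
      unfolding mmul_def by (intro sum.cong refl) (use mpow_row[OF k one, of k'] kk in auto)
    also have "\<dots> = ?A k j" using k by auto
    finally show ?thesis using j k by (simp add: Acomp_last)
  qed
  finally show ?thesis by (simp add: coeff_Ppoly scoef_def)
qed

lemma CH:
  assumes k: "k \<ge> 2" and i: "i \<in> {1..k}" and j: "j \<in> {1..k}"
  shows "peval k s (Ppoly k s) i j = 0"
proof -
  let ?A = "Acomp k s"
  have one: "1 \<in> {1..k}" using k by auto
  have "(\<Sum>l\<in>{1..k}. (if l = i then 1 else 0) * peval k s (Ppoly k s) l j) = (\<Sum>l\<in>{1..k}. if l = i then peval k s (Ppoly k s) l j else 0)"
    by (intro sum.cong) auto
  also have "\<dots> = peval k s (Ppoly k s) i j" using i by simp
  finally have "peval k s (Ppoly k s) i j = (\<Sum>l\<in>{1..k}. (if l = i then 1 else 0) * peval k s (Ppoly k s) l j)" by simp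
  also have "\<dots> = mmul k (mpow k ?A (i-1)) (peval k s (Ppoly k s)) 1 j"
    unfolding mmul_def by (intro sum.cong refl) (use mpow_row[OF k one, of "i-1"] i in auto)
  also have "\<dots> = mmul k (peval k s (Ppoly k s)) (mpow k ?A (i-1)) 1 j"
    by (rule peval_mpow_comm[OF one j, symmetric])
  also have "\<dots> = 0" unfolding mmul_def using CH_row1[OF k] by simp
  finally show ?thesis .
qed

definition SR :: "nat \<Rightarrow> (nat \<Rightarrow> complex) \<Rightarrow> bool" where
  "SR k s \<longleftrightarrow> (\<forall>z. poly (Ppoly k s) z = 0 \<longrightarrow> Pder k s z \<noteq> 0)"

lemma SR_coprime:
  assumes k: "k \<ge> 2" and sr: "SR k s"
  shows "coprime (Ppoly k s) (pderiv (Ppoly k s))"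
proof (rule ccontr)
  let ?P = "Ppoly k s"
  assume nc: "\<not> coprime ?P (pderiv ?P)"
  let ?d = "gcd ?P (pderiv ?P)"
  have "\<not> is_unit ?d" using nc is_unit_gcd by blast
  moreover have d0: "?d \<noteq> 0" using Ppoly_nz by simp
  ultimately have "degree ?d \<noteq> 0" using is_unit_iff_degree by blast
  then have "\<not> constant (poly ?d)" by (simp add: constant_degree)
  then obtain z where z: "poly ?d z = 0" using Fundamental_Theorem_Algebra.fundamental_theorem_of_algebra by blast
  have "poly ?P z = 0" using z by (metis dvd_mult_cancel_left gcd_dvd1 poly_eq_0_iff_dvd dvd_trans)
  moreover have "Pder k s z = 0" unfolding Pder_poly using z
    by (metis gcd_dvd2 poly_eq_0_iff_dvd dvd_trans)
  ultimately show False using sr unfolding SR_def by blast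
qed

lemma SR_invertible:
  assumes k: "k \<ge> 2" and sr: "SR k s"
  shows "minvertible k (PderA k s)"
proof -
  let ?P = "Ppoly k s"
  define a where "a = fst (bezout_coefficients ?P (pderiv ?P))"
  define b where "b = snd (bezout_coefficients ?P (pderiv ?P))"
  have ab: "a * ?P + b * pderiv ?P = 1"
    using bezout_coefficients_fst_snd[of ?P "pderiv ?P"] coprime_imp_gcd_eq_1[OF SR_coprime[OF k sr]]
    by (simp add: a_def b_def)
  have CB: "mmul k (peval k s b) (PderA k s) i j = mid i j" if i: "i \<in> {1..k}" and j: "j \<in> {1..k}" for i j
  proof -
    have "mid i j = peval k s (a * ?P + b * pderiv ?P) i j" by (simp add: ab peval_one)
    also have "\<dots> = mmul k (peval k s a) (peval k s ?P) i j + mmul k (peval k s b) (peval k s (pderiv ?P)) i j"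
      by (simp add: peval_add peval_mult[OF i])
    also have "mmul k (peval k s a) (peval k s ?P) i j = 0"
      unfolding mmul_def using CH[OF k _ j] by simp
    also have "peval k s (pderiv ?P) = PderA k s"
      by (intro ext) (simp add: pderiv_Ppoly peval_Qd)
    finally show ?thesis by simp
  qed
  have BC: "mmul k (PderA k s) (peval k s b) i j = mid i j" if i: "i \<in> {1..k}" and j: "j \<in> {1..k}" for i j
  proof -
    have PQ: "PderA k s = peval k s (Qd k s)" by (intro ext) (simp add: peval_Qd)
    show ?thesis using CB[OF i j] peval_comm[OF i, of s "Qd k s" b] unfolding PQ by simp
  qed
  show ?thesis unfolding minvertible_def is_minv_def using CB BC by blast
qed

definition Lo :: "nat \<Rightarrow> (nat \<times> nat) set" where "Lo k = {(i, j). i < j \<and> j < k}"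
definition Off :: "nat \<Rightarrow> (nat \<times> nat) set" where "Off k = {(i, j). i \<noteq> j \<and> i < k \<and> j < k}"

lemma finite_Lo: "finite (Lo k)"
  by (rule finite_subset[of _ "{..<k} \<times> {..<k}"]) (auto simp: Lo_def)

lemma finite_Off: "finite (Off k)"
  by (rule finite_subset[of _ "{..<k} \<times> {..<k}"]) (auto simp: Off_def)

definition dl :: "nat \<Rightarrow> complex list \<Rightarrow> complex" where
  "dl k zs = (\<Prod>x\<in>Lo k. (zs ! fst x - zs ! snd x)^2)"

definition valid :: "nat \<Rightarrow> (nat \<Rightarrow> complex) \<Rightarrow> complex list \<Rightarrow> bool" where
  "valid k s zs \<longleftrightarrow> length zs = k \<and> Ppoly k s = (\<Prod>z\<leftarrow>zs. [:-z, 1:])"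

lemma discr_eq: "discr k s = (THE d. \<exists>zs. valid k s zs \<and> d = dl k zs)"
proof -
  have "\<And>zs. (\<Prod>(i, j)\<in>{(i, j). i < j \<and> j < k}. (zs ! i - zs ! j) ^ 2) = dl k zs"
    unfolding dl_def Lo_def by (intro prod.cong) auto
  then show ?thesis unfolding discr_def valid_def by simp
qed

lemma proots_linprod: "proots (\<Prod>z\<leftarrow>zs. [:-z, 1:]) = mset zs"
proof (induction zs)
  case Nil
  then show ?case by simp
next
  case (Cons a zs)
  have nz: "(\<Prod>z\<leftarrow>zs. [:-z, 1:]) \<noteq> 0"
    by (auto simp: prod_list_zero_iff)
  have eq: "(\<Prod>z\<leftarrow>a#zs. [:-z, 1:]) = [:-a, 1:] * (\<Prod>z\<leftarrow>zs. [:-z, 1:])" by simp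
  have "proots (\<Prod>z\<leftarrow>a#zs. [:-z, 1:]) = proots [:-a, 1:] + proots (\<Prod>z\<leftarrow>zs. [:-z, 1:])"
    unfolding eq by (rule proots_mult[OF _ nz]) simp
  also have "proots [:-a, 1:] = {#a#}" using proots_linear_factor[of "-a"] by simp
  finally show ?case using Cons by simp
qed

lemma valid_exists: "\<exists>zs. valid k s zs"
proof -
  let ?P = "Ppoly k s"
  obtain zs where zs: "mset zs = proots ?P" using ex_mset by blast
  have "?P = Polynomial.smult (lead_coeff ?P) (\<Prod>x\<in>#proots ?P. [:-x, 1:])"
    by (rule complex_poly_decompose_multiset[symmetric])
  also have "\<dots> = (\<Prod>x\<in>#mset zs. [:-x, 1:])" by (simp add: lead_Ppoly zs)
  also have "\<dots> = (\<Prod>z\<leftarrow>zs. [:-z, 1:])" by (simp only: mset_map[symmetric] prod_mset_prod_list)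
  finally have "?P = (\<Prod>z\<leftarrow>zs. [:-z, 1:])" .
  moreover have "length zs = k"
  proof -
    have "length zs = size (mset zs)" by simp
    also have "\<dots> = size (proots ?P)" by (simp add: zs)
    also have "\<dots> = k" by (simp add: size_proots_complex degree_Ppoly)
    finally show ?thesis .
  qed
  ultimately show ?thesis unfolding valid_def by blast
qed

lemma valid_mset: "valid k s zs \<Longrightarrow> mset zs = proots (Ppoly k s)"
  unfolding valid_def by (simp add: proots_linprod)

lemma order_two_iff:
  assumes k: "k \<ge> 2"
  shows "(order z (Ppoly k s) \<ge> 2) \<longleftrightarrow> (poly (Ppoly k s) z = 0 \<and> Pder k s z = 0)"
proof -
  let ?P = "Ppoly k s"
  have P0: "?P \<noteq> 0" by (rule Ppoly_nz)
  have P'0: "pderiv ?P \<noteq> 0" using k by (simp add: pderiv_eq_0_iff degree_Ppoly)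
  show ?thesis
  proof
    assume o2: "order z ?P \<ge> 2"
    then have r: "poly ?P z = 0" using order_root[of ?P z] by auto
    then have "order z ?P = Suc (order z (pderiv ?P))" by (rule order_pderiv[OF P0])
    then have "order z (pderiv ?P) \<noteq> 0" using o2 by auto
    then have "poly (pderiv ?P) z = 0" using order_root by blast
    then show "poly ?P z = 0 \<and> Pder k s z = 0" using r by (simp add: Pder_poly)
  next
    assume h: "poly ?P z = 0 \<and> Pder k s z = 0"
    then have "order z ?P = Suc (order z (pderiv ?P))" using order_pderiv[OF P0] by blast
    moreover have "order z (pderiv ?P) \<noteq> 0" using h P'0 order_root by (auto simp: Pder_poly)
    ultimately show "order z ?P \<ge> 2" by auto
  qed
qed

lemma SR_iff_distinct:
  assumes k: "k \<ge> 2" and v: "valid k s zs"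
  shows "SR k s \<longleftrightarrow> distinct zs"
proof -
  have cnt: "count (mset zs) z = order z (Ppoly k s)" for z
    using valid_mset[OF v] Ppoly_nz by simp
  have "distinct zs \<longleftrightarrow> (\<forall>z. count (mset zs) z \<le> 1)"
  proof
    assume "distinct zs" then show "\<forall>z. count (mset zs) z \<le> 1" by (simp add: distinct_count_atmost_1)
  next
    assume h: "\<forall>z. count (mset zs) z \<le> 1"
    show "distinct zs" unfolding distinct_count_atmost_1
    proof
      fix a show "count (mset zs) a = (if a \<in> set zs then 1 else 0)"
      proof (cases "a \<in> set zs")
        case True
        then have c0: "count (mset zs) a \<noteq> 0" by (simp add: count_eq_zero_iff)
        have c1: "count (mset zs) a \<le> 1" using h by blast
        from c0 c1 have "count (mset zs) a = 1" by linarith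
        then show ?thesis using True by simp
      next
        case False
        then show ?thesis by (simp add: count_eq_zero_iff)
      qed
    qed
  qed
  also have "\<dots> \<longleftrightarrow> (\<forall>z. \<not> order z (Ppoly k s) \<ge> 2)"
  proof -
    have ar: "\<And>n::nat. (n \<le> 1) = (\<not> n \<ge> 2)" by arith
    show ?thesis unfolding cnt ar by simp
  qed
  also have "\<dots> \<longleftrightarrow> SR k s" unfolding order_two_iff[OF k] SR_def by blast
  finally show ?thesis by simp
qed

lemma dl_zero_iff:
  assumes "length zs = k"
  shows "dl k zs = 0 \<longleftrightarrow> \<not> distinct zs"
proof -
  have "dl k zs = 0 \<longleftrightarrow> (\<exists>x\<in>Lo k. zs ! fst x = zs ! snd x)"
    unfolding dl_def using finite_Lo by (simp add: prod_zero_iff)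
  also have "\<dots> \<longleftrightarrow> (\<exists>i j. i < k \<and> j < k \<and> i \<noteq> j \<and> zs ! i = zs ! j)"
  proof
    assume "\<exists>x\<in>Lo k. zs ! fst x = zs ! snd x"
    then obtain i j where "i < j" "j < k" "zs ! i = zs ! j" unfolding Lo_def by auto
    then show "\<exists>i j. i < k \<and> j < k \<and> i \<noteq> j \<and> zs ! i = zs ! j"
      by (intro exI[of _ i] exI[of _ j]) auto
  next
    assume "\<exists>i j. i < k \<and> j < k \<and> i \<noteq> j \<and> zs ! i = zs ! j"
    then obtain i j where ij: "i < k" "j < k" "i \<noteq> j" "zs ! i = zs ! j" by blast
    show "\<exists>x\<in>Lo k. zs ! fst x = zs ! snd x"
    proof (cases "i < j")
      case True then show ?thesis using ij by (intro bexI[of _ "(i,j)"]) (auto simp: Lo_def)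
    next
      case False then show ?thesis using ij by (intro bexI[of _ "(j,i)"]) (auto simp: Lo_def)
    qed
  qed
  also have "\<dots> \<longleftrightarrow> \<not> distinct zs" using assms by (auto simp: distinct_conv_nth)
  finally show ?thesis .
qed

lemma off_lo:
  fixes f :: "nat \<Rightarrow> complex"
  shows "(\<Prod>x\<in>Off k. f (fst x) - f (snd x)) = (-1)^(card (Lo k)) * (\<Prod>x\<in>Lo k. (f (fst x) - f (snd x))^2)"
proof -
  let ?g = "\<lambda>x. f (fst x) - f (snd x)"
  define Hi where "Hi = {(i, j). j < i \<and> i < k}"
  have Off: "Off k = Lo k \<union> Hi" unfolding Off_def Lo_def Hi_def by (auto simp: neq_iff)
  have disj: "Lo k \<inter> Hi = {}" unfolding Lo_def Hi_def by auto
  have fHi: "finite Hi" by (rule finite_subset[of _ "{..<k} \<times> {..<k}"]) (auto simp: Hi_def)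
  have bij: "bij_betw prod.swap (Lo k) Hi"
    by (rule bij_betw_byWitness[where f'=prod.swap]) (auto simp: Lo_def Hi_def)
  have "(\<Prod>x\<in>Off k. ?g x) = (\<Prod>x\<in>Lo k. ?g x) * (\<Prod>x\<in>Hi. ?g x)"
    unfolding Off using finite_Lo fHi disj by (intro prod.union_disjoint) auto
  also have "(\<Prod>x\<in>Hi. ?g x) = (\<Prod>x\<in>Lo k. ?g (prod.swap x))"
    by (rule prod.reindex_bij_betw[OF bij, symmetric])
  also have "\<dots> = (\<Prod>x\<in>Lo k. (-1) * ?g x)" by (intro prod.cong) auto
  also have "\<dots> = (\<Prod>x\<in>Lo k. (-1::complex)) * (\<Prod>x\<in>Lo k. ?g x)" by (rule prod.distrib)
  also have "\<dots> = (-1)^(card (Lo k)) * (\<Prod>x\<in>Lo k. ?g x)" by simp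
  finally show ?thesis by (simp add: power2_eq_square prod.distrib mult_ac)
qed

lemma off_perm:
  fixes f :: "nat \<Rightarrow> complex"
  assumes p: "p permutes {..<k}"
  shows "(\<Prod>x\<in>Off k. f (p (fst x)) - f (p (snd x))) = (\<Prod>x\<in>Off k. f (fst x) - f (snd x))"
proof -
  let ?h = "\<lambda>x. (p (fst x), p (snd x))"
  have bij: "bij_betw ?h (Off k) (Off k)"
  proof (rule bij_betw_byWitness[where f'="\<lambda>x. (inv_into UNIV p (fst x), inv_into UNIV p (snd x))"])
    show "\<forall>a\<in>Off k. (inv_into UNIV p (fst (?h a)), inv_into UNIV p (snd (?h a))) = a"
      using permutes_inverses(2)[OF p] by auto
    show "\<forall>a'\<in>Off k. ?h (inv_into UNIV p (fst a'), inv_into UNIV p (snd a')) = a'"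
      using permutes_inverses(1)[OF p] by auto
    have ip: "inj p" by (rule permutes_inj[OF p])
    show "?h ` Off k \<subseteq> Off k"
    proof
      fix y assume "y \<in> ?h ` Off k"
      then obtain a b where y: "y = (p a, p b)" "a \<noteq> b" "a < k" "b < k" unfolding Off_def by auto
      have "p a < k" "p b < k" using permutes_in_image[OF p, of a] permutes_in_image[OF p, of b] y by auto
      moreover have "p a \<noteq> p b" using y ip by (auto simp: inj_on_def)
      ultimately show "y \<in> Off k" using y unfolding Off_def by simp
    qed
    have pi: "inv_into UNIV p permutes {..<k}" by (rule permutes_inv[OF p])
    have ipi: "inj (inv_into UNIV p)" by (rule permutes_inj[OF pi])
    show "(\<lambda>x. (inv_into UNIV p (fst x), inv_into UNIV p (snd x))) ` Off k \<subseteq> Off k"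
    proof
      fix y assume "y \<in> (\<lambda>x. (inv_into UNIV p (fst x), inv_into UNIV p (snd x))) ` Off k"
      then obtain a b where y: "y = (inv_into UNIV p a, inv_into UNIV p b)" "a \<noteq> b" "a < k" "b < k" unfolding Off_def by auto
      have "inv_into UNIV p a < k" "inv_into UNIV p b < k" using permutes_in_image[OF pi, of a] permutes_in_image[OF pi, of b] y by auto
      moreover have "inv_into UNIV p a \<noteq> inv_into UNIV p b" using y ipi by (auto simp: inj_on_def)
      ultimately show "y \<in> Off k" using y unfolding Off_def by simp
    qed
  qed
  have "(\<Prod>x\<in>Off k. (\<lambda>y. f (fst y) - f (snd y)) (?h x)) = (\<Prod>x\<in>Off k. f (fst x) - f (snd x))"
    by (rule prod.reindex_bij_betw[OF bij])
  then show ?thesis by simp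
qed

lemma dl_perm:
  assumes v1: "valid k s zs" and v2: "valid k s zs'"
  shows "dl k zs = dl k zs'"
proof -
  have "mset zs = mset zs'" using valid_mset[OF v1] valid_mset[OF v2] by simp
  then obtain p where p: "p permutes {..<length zs'}" "permute_list p zs' = zs"
    by (rule mset_eq_permutation)
  have len: "length zs' = k" "length zs = k" using v1 v2 by (auto simp: valid_def)
  have p': "p permutes {..<k}" using p len by simp
  have nth: "zs ! i = zs' ! p i" if "i < k" for i
  proof -
    have "permute_list p zs' ! i = zs' ! p i" by (rule permute_list_nth[OF p(1)]) (use that len in simp)
    then show ?thesis using p(2) by simp
  qed
  have "(-1)^(card (Lo k)) * dl k zs = (\<Prod>x\<in>Off k. zs ! fst x - zs ! snd x)"
    unfolding dl_def using off_lo[where k=k and f="\<lambda>i. zs ! i"] by simp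
  also have "\<dots> = (\<Prod>x\<in>Off k. zs' ! p (fst x) - zs' ! p (snd x))"
    by (intro prod.cong) (auto simp: Off_def nth)
  also have "\<dots> = (\<Prod>x\<in>Off k. zs' ! fst x - zs' ! snd x)"
    by (rule off_perm[OF p', of "\<lambda>i. zs' ! i"])
  also have "\<dots> = (-1)^(card (Lo k)) * dl k zs'"
    unfolding dl_def using off_lo[where k=k and f="\<lambda>i. zs' ! i"] by simp
  finally show ?thesis by simp
qed

lemma discr_iff:
  assumes k: "k \<ge> 2"
  shows "discr k s \<noteq> 0 \<longleftrightarrow> SR k s"
proof -
  obtain zs0 where v0: "valid k s zs0" using valid_exists by blast
  have "discr k s = dl k zs0"
    unfolding discr_eq
  proof (rule the_equality)
    show "\<exists>zs. valid k s zs \<and> dl k zs0 = dl k zs" using v0 by blast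
    show "\<And>d. \<exists>zs. valid k s zs \<and> d = dl k zs \<Longrightarrow> d = dl k zs0" using dl_perm[OF _ v0] by blast
  qed
  moreover have "length zs0 = k" using v0 by (simp add: valid_def)
  moreover have "dl k zs0 = 0 \<longleftrightarrow> \<not> distinct zs0" using v0 dl_zero_iff[of zs0 k] by (simp add: valid_def)
  ultimately show ?thesis using SR_iff_distinct[OF k v0] by simp
qed

lemma Ck_minus_Disc:
  assumes k: "k \<ge> 2"
  shows "Ck k - DiscSet k = {s \<in> Ck k. minvertible k (PderA k s)}"
proof -
  have "minvertible k (PderA k s) \<longleftrightarrow> SR k s" for s
  proof
    assume "minvertible k (PderA k s)"
    then show "SR k s" using double_root_singular[OF k] unfolding SR_def by blast
  qed (rule SR_invertible[OF k])
  then show ?thesis using discr_iff[OF k] unfolding DiscSet_def by auto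
qed

lemma sum_1k: "(\<Sum>l=1..k. g l) = (\<Sum>l<k. (g (Suc l)::complex))"
  by (induction k) (auto simp: sum.cl_ivl_Suc)

definition J :: "nat \<Rightarrow> (nat \<Rightarrow> nat \<Rightarrow> complex) \<Rightarrow> complex mat" where
  "J k M = Matrix.mat k k (\<lambda>(i, j). M (Suc i) (Suc j))"

lemma J_carrier: "J k M \<in> carrier_mat k k"
  by (simp add: J_def)

lemma J_index: "i < k \<Longrightarrow> j < k \<Longrightarrow> J k M $$ (i, j) = M (Suc i) (Suc j)"
  by (simp add: J_def)

lemma J_mult_index:
  assumes "i < k" "j < k" "N \<in> carrier_mat k k"
  shows "(J k M * N) $$ (i, j) = (\<Sum>l<k. M (Suc i) (Suc l) * N $$ (l, j))"
  using assms by (simp add: index_mult_mat scalar_prod_def J_def atLeast0LessThan)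

lemma minvertible_det: "minvertible k M \<longleftrightarrow> Determinant.det (J k M) \<noteq> 0"
proof
  assume "minvertible k M"
  then obtain C where C: "is_minv k M C" unfolding minvertible_def by blast
  have "J k M * J k C = 1\<^sub>m k"
  proof (rule eq_matI)
    fix i j assume ij: "i < dim_row (1\<^sub>m k :: complex mat)" "j < dim_col (1\<^sub>m k :: complex mat)"
    then have ij': "i < k" "j < k" by auto
    have "(J k M * J k C) $$ (i, j) = (\<Sum>l<k. M (Suc i) (Suc l) * C (Suc l) (Suc j))"
      using ij' by (simp add: J_mult_index J_carrier J_index)
    also have "\<dots> = mmul k M C (Suc i) (Suc j)" unfolding mmul_def sum_1k ..
    also have "\<dots> = mid (Suc i) (Suc j)" using C ij' by (simp add: is_minv_def)
    also have "\<dots> = 1\<^sub>m k $$ (i, j)" using ij' by (simp add: mid_def)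
    finally show "(J k M * J k C) $$ (i, j) = 1\<^sub>m k $$ (i, j)" .
  qed (auto simp: J_def)
  then have "Determinant.det (J k M) * Determinant.det (J k C) = 1"
    using det_mult[OF J_carrier J_carrier, of k M C] by simp
  then show "Determinant.det (J k M) \<noteq> 0" by auto
next
  assume d: "Determinant.det (J k M) \<noteq> 0"
  let ?A = "J k M"
  let ?C = "\<lambda>i j. adj_mat ?A $$ (i - 1, j - 1) / Determinant.det ?A"
  have adjc: "adj_mat ?A \<in> carrier_mat k k" using adj_mat(1)[OF J_carrier] .
  have "is_minv k M ?C" unfolding is_minv_def
  proof (intro ballI conjI)
    fix i j assume i: "i \<in> {1..k}" and j: "j \<in> {1..k}"
    then obtain i' j' where ij: "i = Suc i'" "j = Suc j'" "i' < k" "j' < k"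
      by (metis atLeastAtMost_iff Suc_le_eq Suc_pred' less_Suc_eq_le neq0_conv not_one_le_zero)
    have "mmul k M ?C i j = (\<Sum>l<k. M (Suc i') (Suc l) * adj_mat ?A $$ (l, j')) / Determinant.det ?A"
      unfolding mmul_def sum_1k ij by (simp add: sum_divide_distrib)
    also have "(\<Sum>l<k. M (Suc i') (Suc l) * adj_mat ?A $$ (l, j')) = (?A * adj_mat ?A) $$ (i', j')"
      using ij adjc by (simp add: J_mult_index)
    also have "\<dots> = (Determinant.det ?A \<cdot>\<^sub>m 1\<^sub>m k) $$ (i', j')" using adj_mat(2)[OF J_carrier] by simp
    also have "\<dots> = Determinant.det ?A * mid i j" using ij by (simp add: mid_def)
    finally show "mmul k M ?C i j = mid i j" using d by simp
    have "mmul k ?C M i j = (\<Sum>l<k. adj_mat ?A $$ (i', l) * ?A $$ (l, j')) / Determinant.det ?A"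
      unfolding mmul_def sum_1k ij using ij by (simp add: sum_divide_distrib J_index)
    also have "(\<Sum>l<k. adj_mat ?A $$ (i', l) * ?A $$ (l, j')) = (adj_mat ?A * ?A) $$ (i', j')"
      using ij adjc by (simp add: index_mult_mat scalar_prod_def J_def atLeast0LessThan)
    also have "\<dots> = (Determinant.det ?A \<cdot>\<^sub>m 1\<^sub>m k) $$ (i', j')" using adj_mat(3)[OF J_carrier] by simp
    also have "\<dots> = Determinant.det ?A * mid i j" using ij by (simp add: mid_def)
    finally show "mmul k ?C M i j = mid i j" using d by simp
  qed
  then show "minvertible k M" unfolding minvertible_def by blast
qed

lemma minv_adj:
  assumes "minvertible k M" "i \<in> {1..k}" "j \<in> {1..k}"
  shows "minv k M i j = adj_mat (J k M) $$ (i - 1, j - 1) / Determinant.det (J k M)"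
proof -
  let ?A = "J k M"
  let ?C = "\<lambda>i j. adj_mat ?A $$ (i - 1, j - 1) / Determinant.det ?A"
  have d: "Determinant.det ?A \<noteq> 0" using assms(1) minvertible_det by blast
  have adjc: "adj_mat ?A \<in> carrier_mat k k" using adj_mat(1)[OF J_carrier] .
  have "is_minv k M ?C" unfolding is_minv_def
  proof (intro ballI conjI)
    fix i j assume i: "i \<in> {1..k}" and j: "j \<in> {1..k}"
    then obtain i' j' where ij: "i = Suc i'" "j = Suc j'" "i' < k" "j' < k"
      by (metis atLeastAtMost_iff Suc_le_eq Suc_pred' less_Suc_eq_le neq0_conv not_one_le_zero)
    have "mmul k M ?C i j = (\<Sum>l<k. M (Suc i') (Suc l) * adj_mat ?A $$ (l, j')) / Determinant.det ?A"
      unfolding mmul_def sum_1k ij by (simp add: sum_divide_distrib)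
    also have "(\<Sum>l<k. M (Suc i') (Suc l) * adj_mat ?A $$ (l, j')) = (?A * adj_mat ?A) $$ (i', j')"
      using ij adjc by (simp add: J_mult_index)
    also have "\<dots> = (Determinant.det ?A \<cdot>\<^sub>m 1\<^sub>m k) $$ (i', j')" using adj_mat(2)[OF J_carrier] by simp
    also have "\<dots> = Determinant.det ?A * mid i j" using ij by (simp add: mid_def)
    finally show "mmul k M ?C i j = mid i j" using d by simp
    have "mmul k ?C M i j = (\<Sum>l<k. adj_mat ?A $$ (i', l) * ?A $$ (l, j')) / Determinant.det ?A"
      unfolding mmul_def sum_1k ij using ij by (simp add: sum_divide_distrib J_index)
    also have "(\<Sum>l<k. adj_mat ?A $$ (i', l) * ?A $$ (l, j')) = (adj_mat ?A * ?A) $$ (i', j')"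
      using ij adjc by (simp add: index_mult_mat scalar_prod_def J_def atLeast0LessThan)
    also have "\<dots> = (Determinant.det ?A \<cdot>\<^sub>m 1\<^sub>m k) $$ (i', j')" using adj_mat(3)[OF J_carrier] by simp
    also have "\<dots> = Determinant.det ?A * mid i j" using ij by (simp add: mid_def)
    finally show "mmul k ?C M i j = mid i j" using d by simp
  qed
  then show ?thesis using is_minv_unique[OF minv_is[OF assms(1)] _ assms(2,3)] by blast
qed

definition goodf :: "((nat \<Rightarrow> complex) \<Rightarrow> complex) \<Rightarrow> bool" where
  "goodf F \<longleftrightarrow> continuous_on UNIV F \<and> (\<forall>s j. (\<lambda>t. F (s(j := t))) holomorphic_on UNIV)"

lemma goodf_const: "goodf (\<lambda>s. c)"
  by (simp add: goodf_def)

lemma goodf_proj: "goodf (\<lambda>s. s i)"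
  unfolding goodf_def
proof (intro conjI allI)
  show "continuous_on UNIV (\<lambda>s::nat \<Rightarrow> complex. s i)" by simp
  fix s :: "nat \<Rightarrow> complex" and j
  show "(\<lambda>t. (s(j := t)) i) holomorphic_on UNIV"
    by (cases "i = j") (auto intro!: holomorphic_intros)
qed

lemma goodf_add: "goodf F \<Longrightarrow> goodf G \<Longrightarrow> goodf (\<lambda>s. F s + G s)"
  unfolding goodf_def by (auto intro!: continuous_intros holomorphic_intros)

lemma goodf_diff: "goodf F \<Longrightarrow> goodf G \<Longrightarrow> goodf (\<lambda>s. F s - G s)"
  unfolding goodf_def by (auto intro!: continuous_intros holomorphic_intros)

lemma goodf_mult: "goodf F \<Longrightarrow> goodf G \<Longrightarrow> goodf (\<lambda>s. F s * G s)"
  unfolding goodf_def by (auto intro!: continuous_intros holomorphic_intros)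

lemma goodf_sum: "(\<And>x. x \<in> S \<Longrightarrow> goodf (F x)) \<Longrightarrow> goodf (\<lambda>s. \<Sum>x\<in>S. F x s)"
  unfolding goodf_def by (auto intro!: continuous_on_sum holomorphic_on_sum)

lemma goodf_prod: "(\<And>x. x \<in> S \<Longrightarrow> goodf (F x)) \<Longrightarrow> goodf (\<lambda>s. \<Prod>x\<in>S. F x s)"
  unfolding goodf_def by (auto intro!: continuous_on_prod holomorphic_on_prod)

lemma goodf_scoef: "goodf (\<lambda>s. scoef s h)"
  by (cases "h = 0") (simp_all add: scoef_def goodf_const goodf_proj)

lemma goodf_Acomp: "goodf (\<lambda>s. Acomp k s i j)"
proof -
  have eq: "(\<lambda>s. Acomp k s i j) = (if 1 \<le> i \<and> i \<le> k - 1 \<and> j = i + 1 then (\<lambda>s. 1)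
      else if i = k \<and> 1 \<le> j \<and> j \<le> k then (\<lambda>s. (-1)^(k-j) * s (k+1-j)) else (\<lambda>s. 0))"
    by (auto simp: Acomp_def fun_eq_iff)
  show ?thesis unfolding eq by (auto simp: goodf_const intro!: goodf_mult goodf_proj)
qed

lemma goodf_mmul: "(\<And>l. goodf (\<lambda>s. M s i l)) \<Longrightarrow> (\<And>l. goodf (\<lambda>s. N s l j)) \<Longrightarrow> goodf (\<lambda>s. mmul k (M s) (N s) i j)"
  unfolding mmul_def by (intro goodf_sum goodf_mult) auto

lemma goodf_mpow: "goodf (\<lambda>s. mpow k (Acomp k s) n i j)"
proof (induction n arbitrary: i j)
  case 0
  then show ?case by (simp add: goodf_const)
next
  case (Suc n)
  then show ?case by (simp add: goodf_mmul goodf_Acomp)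
qed

lemma goodf_PderA: "goodf (\<lambda>s. PderA k s i j)"
  unfolding PderA_def
  by (intro goodf_sum goodf_mult goodf_const goodf_scoef goodf_mpow)

lemma goodf_det:
  assumes "\<And>s. M s \<in> carrier_mat n n" "\<And>i j. i < n \<Longrightarrow> j < n \<Longrightarrow> goodf (\<lambda>s. M s $$ (i, j))"
  shows "goodf (\<lambda>s. Determinant.det (M s))"
proof -
  have eq: "(\<lambda>s. Determinant.det (M s)) = (\<lambda>s. \<Sum>p\<in>{p. p permutes {0..<n}}. of_int (sign p) * (\<Prod>i\<in>{0..<n}. M s $$ (i, p i)))"
    using det_def'[OF assms(1)] by (intro ext) simp
  show ?thesis unfolding eq
  proof (intro goodf_sum goodf_mult goodf_const goodf_prod)
    fix p i assume p: "p \<in> {p. p permutes {0..<n}}" and i: "i \<in> {0..<n}"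
    then have "p i < n" using permutes_in_image[of p "{0..<n}" i] by auto
    then show "goodf (\<lambda>s. M s $$ (i, p i))" using i by (intro assms(2)) auto
  qed
qed

lemma goodf_detJ: "goodf (\<lambda>s. Determinant.det (J k (PderA k s)))"
  by (rule goodf_det[of _ k]) (auto simp: J_carrier J_index goodf_PderA)

lemma goodf_adjJ:
  assumes "a < k" "b < k"
  shows "goodf (\<lambda>s. adj_mat (J k (PderA k s)) $$ (a, b))"
proof -
  have eq: "(\<lambda>s. adj_mat (J k (PderA k s)) $$ (a, b)) = (\<lambda>s. (-1)^(b+a) * Determinant.det (mat_delete (J k (PderA k s)) b a))"
    using assms by (intro ext) (simp add: adj_mat_def J_def cofactor_def)
  have "goodf (\<lambda>s. Determinant.det (mat_delete (J k (PderA k s)) b a))"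
  proof (rule goodf_det[of _ "k - 1"])
    show "\<And>s. mat_delete (J k (PderA k s)) b a \<in> carrier_mat (k - 1) (k - 1)"
      by (simp add: mat_delete_def J_def)
    fix i j assume "i < k - 1" "j < k - 1"
    then show "goodf (\<lambda>s. mat_delete (J k (PderA k s)) b a $$ (i, j))"
      by (simp add: mat_delete_def J_def goodf_PderA)
  qed
  then show ?thesis unfolding eq by (intro goodf_mult goodf_const)
qed

lemma holo_k_goodf: "goodf F \<Longrightarrow> holo_k k U F"
  unfolding goodf_def holo_k_def
  by (auto intro: continuous_on_subset holomorphic_on_imp_differentiable_at)

lemma holo_k_add: "holo_k k U F \<Longrightarrow> holo_k k U G \<Longrightarrow> holo_k k U (\<lambda>s. F s + G s)"
  unfolding holo_k_def by (auto intro!: continuous_intros field_differentiable_add)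

lemma holo_k_mult: "holo_k k U F \<Longrightarrow> holo_k k U G \<Longrightarrow> holo_k k U (\<lambda>s. F s * G s)"
  unfolding holo_k_def by (auto intro!: continuous_intros field_differentiable_mult)

lemma holo_k_div: "holo_k k U F \<Longrightarrow> holo_k k U G \<Longrightarrow> (\<And>s. s \<in> U \<Longrightarrow> G s \<noteq> 0) \<Longrightarrow> holo_k k U (\<lambda>s. F s / G s)"
  unfolding holo_k_def by (auto intro!: continuous_intros field_differentiable_divide)

lemma holo_k_sum: "(\<And>x. x \<in> S \<Longrightarrow> holo_k k U (F x)) \<Longrightarrow> holo_k k U (\<lambda>s. \<Sum>x\<in>S. F x s)"
proof (induction S rule: infinite_finite_induct)
  case (infinite A)
  then show ?case by (simp add: holo_k_goodf goodf_const)
next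
  case empty
  then show ?case by (simp add: holo_k_goodf goodf_const)
next
  case (insert x F)
  then show ?case by (simp add: holo_k_add)
qed

lemma holo_k_mvec:
  assumes "\<And>l. l \<in> {1..k} \<Longrightarrow> holo_k k U (\<lambda>s. M s i l)" "\<And>l. l \<in> {1..k} \<Longrightarrow> holo_k k U (\<lambda>s. V s l)"
  shows "holo_k k U (\<lambda>s. mvec k (M s) (V s) i)"
  unfolding mvec_def using assms by (intro holo_k_sum holo_k_mult) auto

lemma line_cont: "continuous_on UNIV (\<lambda>t::complex. s(j := t))"
proof (intro continuous_on_coordinatewise_then_product)
  fix i show "continuous_on UNIV (\<lambda>t::complex. (s(j := t)) i)"
    by (cases "i = j") (auto intro: continuous_intros)
qed

lemma ev_line:
  assumes U: "admissible k U" and s: "s \<in> U" and j: "j \<in> {1..k}"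
  shows "\<forall>\<^sub>F t in nhds (s j). s(j := t) \<in> U"
proof -
  obtain T where T: "open T" "U = Ck k \<inter> T" using U unfolding admissible_def openin_open by blast
  have o: "open ((\<lambda>t. s(j := t)) -` T)" by (rule open_vimage[OF T(1) line_cont])
  have sj: "s j \<in> (\<lambda>t. s(j := t)) -` T" using s T by auto
  have sCk: "s \<in> Ck k" using s T by auto
  have "\<And>t. t \<in> (\<lambda>t. s(j := t)) -` T \<Longrightarrow> s(j := t) \<in> U"
    using sCk j T by (auto simp: Ck_def)
  then show ?thesis using o sj by (metis eventually_nhds)
qed

lemma holo_k_local:
  assumes U: "admissible k U" and eq: "\<And>s. s \<in> U \<Longrightarrow> F s = G s" and G: "holo_k k U G"
  shows "holo_k k U F"
  unfolding holo_k_def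
proof (intro conjI ballI)
  show "continuous_on U F" using G eq unfolding holo_k_def by (metis continuous_on_cong)
  fix s j assume s: "s \<in> U" and j: "j \<in> {1..k}"
  have ev: "\<forall>\<^sub>F t in nhds (s j). t \<in> UNIV \<longrightarrow> F (s(j := t)) = G (s(j := t))"
    using ev_line[OF U s j] eq by (auto elim!: eventually_mono)
  obtain D where D: "((\<lambda>t. G (s(j := t))) has_field_derivative D) (at (s j))"
    using G s j unfolding holo_k_def field_differentiable_def by blast
  have "((\<lambda>t. F (s(j := t))) has_field_derivative D) (at (s j))"
    using has_field_derivative_cong_ev[OF refl ev refl refl] D by simp
  then show "(\<lambda>t. F (s(j := t))) field_differentiable at (s j)"
    unfolding field_differentiable_def by blast
qed

lemma Ck_minus_Disc_det:
  assumes k: "k \<ge> 2"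
  shows "Ck k - DiscSet k = Ck k \<inter> {s. Determinant.det (J k (PderA k s)) \<noteq> 0}"
  unfolding Ck_minus_Disc[OF k] minvertible_det by auto

lemma admissible_main:
  assumes k: "k \<ge> 2"
  shows "admissible k (Ck k - DiscSet k)"
  unfolding admissible_def
proof
  show "Ck k - DiscSet k \<subseteq> Ck k - DiscSet k" by simp
  have "open {s. Determinant.det (J k (PderA k s)) \<noteq> 0}"
    using goodf_detJ[of k] unfolding goodf_def by (intro open_Collect_neq) (auto intro: continuous_intros)
  then show "openin (top_of_set (Ck k)) (Ck k - DiscSet k)"
    unfolding Ck_minus_Disc_det[OF k] openin_open by blast
qed

lemma adm_invertible:
  assumes k: "k \<ge> 2" and U: "admissible k U" and s: "s \<in> U"
  shows "minvertible k (PderA k s)"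
  using U s Ck_minus_Disc[OF k] unfolding admissible_def by auto

lemma holo_minv:
  assumes k: "k \<ge> 2" and U: "admissible k U" and i: "i \<in> {1..k}" and j: "j \<in> {1..k}"
  shows "holo_k k U (\<lambda>s. minv k (PderA k s) i j)"
proof (rule holo_k_local[OF U])
  let ?G = "\<lambda>s. adj_mat (J k (PderA k s)) $$ (i - 1, j - 1) / Determinant.det (J k (PderA k s))"
  show "\<And>s. s \<in> U \<Longrightarrow> minv k (PderA k s) i j = ?G s"
    using minv_adj[OF _ i j] adm_invertible[OF k U] by blast
  show "holo_k k U ?G"
  proof (rule holo_k_div)
    show "holo_k k U (\<lambda>s. adj_mat (J k (PderA k s)) $$ (i - 1, j - 1))"
      using i j by (intro holo_k_goodf goodf_adjJ) auto
    show "holo_k k U (\<lambda>s. Determinant.det (J k (PderA k s)))" by (intro holo_k_goodf goodf_detJ)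
    show "\<And>s. s \<in> U \<Longrightarrow> Determinant.det (J k (PderA k s)) \<noteq> 0"
      using adm_invertible[OF k U] minvertible_det by blast
  qed
qed

definition dA :: "nat \<Rightarrow> nat \<Rightarrow> nat \<Rightarrow> nat \<Rightarrow> complex" where
  "dA k h i j = (if i = k \<and> 1 \<le> j \<and> j \<le> k \<and> k + 1 - j = h then (-1)^(k-j) else 0)"

lemma dA_deriv:
  assumes h: "h \<in> {1..k}"
  shows "((\<lambda>t. Acomp k (s(h:=t)) i j) has_field_derivative dA k h i j) (at t0)"
proof -
  consider (c1) "1 \<le> i \<and> i \<le> k - 1 \<and> j = i + 1"
    | (c2) "\<not> (1 \<le> i \<and> i \<le> k - 1 \<and> j = i + 1)" "i = k \<and> 1 \<le> j \<and> j \<le> k"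
    | (c3) "\<not> (1 \<le> i \<and> i \<le> k - 1 \<and> j = i + 1)" "\<not> (i = k \<and> 1 \<le> j \<and> j \<le> k)" by blast
  then show ?thesis
  proof cases
    case c1
    then have "(\<lambda>t. Acomp k (s(h:=t)) i j) = (\<lambda>t. 1)" by (auto simp: Acomp_def fun_eq_iff)
    moreover have "dA k h i j = 0" using c1 h by (auto simp: dA_def)
    ultimately show ?thesis by simp
  next
    case c2
    show ?thesis
    proof (cases "k + 1 - j = h")
      case True
      then have "(\<lambda>t. Acomp k (s(h:=t)) i j) = (\<lambda>t. (-1)^(k-j) * t)" using c2 by (auto simp: Acomp_def fun_eq_iff)
      moreover have "dA k h i j = (-1)^(k-j)" using c2 True by (auto simp: dA_def)
      ultimately show ?thesis using DERIV_cmult[OF DERIV_ident, of "(-1)^(k-j)"] by simp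
    next
      case False
      then have "(\<lambda>t. Acomp k (s(h:=t)) i j) = (\<lambda>t. (-1)^(k-j) * s (k+1-j))" using c2 by (auto simp: Acomp_def fun_eq_iff)
      moreover have "dA k h i j = 0" using c2 False by (auto simp: dA_def)
      ultimately show ?thesis by simp
    qed
  next
    case c3
    then have "(\<lambda>t. Acomp k (s(h:=t)) i j) = (\<lambda>t. 0)" by (auto simp: Acomp_def fun_eq_iff)
    moreover have "dA k h i j = 0" using c3 by (auto simp: dA_def)
    ultimately show ?thesis by simp
  qed
qed

fun dPow :: "nat \<Rightarrow> nat \<Rightarrow> (nat \<Rightarrow> complex) \<Rightarrow> nat \<Rightarrow> nat \<Rightarrow> nat \<Rightarrow> complex" where
  "dPow k h s 0 = (\<lambda>i j. 0)"
| "dPow k h s (Suc n) = (\<lambda>i j. mmul k (dA k h) (mpow k (Acomp k s) n) i j + mmul k (Acomp k s) (dPow k h s n) i j)"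

lemma dPow_deriv:
  assumes h: "h \<in> {1..k}"
  shows "((\<lambda>t. mpow k (Acomp k (s(h:=t))) n i j) has_field_derivative dPow k h s n i j) (at (s h))"
proof (induction n arbitrary: i j)
  case 0
  show ?case by simp
next
  case (Suc n)
  have "((\<lambda>t. \<Sum>l\<in>{1..k}. Acomp k (s(h:=t)) i l * mpow k (Acomp k (s(h:=t))) n l j) has_field_derivative
     (\<Sum>l\<in>{1..k}. dA k h i l * mpow k (Acomp k (s(h:=s h))) n l j + dPow k h s n l j * Acomp k (s(h:= s h)) i l)) (at (s h))"
    by (intro DERIV_sum DERIV_mult dA_deriv[OF h] Suc.IH)
  then show ?case by (simp add: mmul_def sum.distrib mult.commute fun_upd_def)
qed

definition dB :: "nat \<Rightarrow> nat \<Rightarrow> (nat \<Rightarrow> complex) \<Rightarrow> nat \<Rightarrow> nat \<Rightarrow> complex" where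
  "dB k h s i j = (\<Sum>m<k. (-1)^m * of_nat (k-m) * ((if m = h then 1 else 0) * mpow k (Acomp k s) (k-m-1) i j
       + scoef s m * dPow k h s (k-m-1) i j))"

lemma scoef_deriv:
  assumes h: "h \<in> {1..k}"
  shows "((\<lambda>t. scoef (s(h:=t)) m) has_field_derivative (if m = h then 1 else 0)) (at t0)"
proof (cases "m = 0")
  case True
  then show ?thesis using h by (simp add: scoef_def)
next
  case False
  show ?thesis
  proof (cases "m = h")
    case True
    then have "(\<lambda>t. scoef (s(h:=t)) m) = (\<lambda>t. t)" using False by (auto simp: scoef_def fun_eq_iff)
    then show ?thesis using True by simp
  next
    case F2: False
    then have "(\<lambda>t. scoef (s(h:=t)) m) = (\<lambda>t. s m)" using False by (auto simp: scoef_def fun_eq_iff)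
    then show ?thesis using F2 by simp
  qed
qed

lemma dB_deriv:
  assumes h: "h \<in> {1..k}"
  shows "((\<lambda>t. PderA k (s(h:=t)) i j) has_field_derivative dB k h s i j) (at (s h))"
proof -
  have "((\<lambda>t. \<Sum>m<k. (-1)^m * of_nat (k - m) * scoef (s(h:=t)) m * mpow k (Acomp k (s(h:=t))) (k - m - 1) i j)
     has_field_derivative (\<Sum>m<k. (-1)^m * of_nat (k - m) * (if m = h then 1 else 0) * mpow k (Acomp k (s(h:=s h))) (k - m - 1) i j
        + dPow k h s (k-m-1) i j * ((-1)^m * of_nat (k - m) * scoef (s(h:=s h)) m))) (at (s h))"
    by (intro DERIV_sum DERIV_mult DERIV_cmult scoef_deriv[OF h] dPow_deriv[OF h])
  then show ?thesis unfolding PderA_def dB_def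
    by (rule DERIV_cong) (intro sum.cong refl, simp add: algebra_simps)
qed

lemma neg1_sq: "(-1::complex)^n * (-1)^n = 1"
  by (induction n) auto

lemma dA_rel:
  assumes k: "k \<ge> 2" and h: "h \<in> {1..k}" and l: "l \<in> {1..k}"
  shows "dA k h i l = (-1)^(h+k) * mmul k (dA k k) (mpow k (Acomp k s) (k-h)) i l"
proof -
  let ?P = "mpow k (Acomp k s) (k-h)"
  have one: "1 \<in> {1..k}" using k by auto
  have "mmul k (dA k k) ?P i l = (\<Sum>m\<in>{1..k}. if m = 1 then (if i = k then (-1)^(k-1) * ?P 1 l else 0) else 0)"
    unfolding mmul_def by (intro sum.cong refl) (auto simp: dA_def)
  also have "\<dots> = (if i = k then (-1)^(k-1) * ?P 1 l else 0)" using one by simp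
  also have "?P 1 l = (if l = 1 + (k-h) then 1 else 0)" using h l by (intro mpow_row[OF k one]) auto
  finally have R: "mmul k (dA k k) ?P i l = (if i = k \<and> l = k + 1 - h then (-1)^(k-1) else 0)"
    using h by auto
  show ?thesis
  proof (cases "i = k \<and> l = k + 1 - h")
    case True
    obtain h' where h': "h = Suc h'" using h by (cases h) auto
    obtain k' where k': "k = Suc k'" using k by (cases k) auto
    have hk: "h' \<le> k'" using h h' k' by auto
    have kl: "k - l = h'" using True h' k' hk by auto
    have "dA k h i l = (-1)^h'" using True l h h' kl by (auto simp: dA_def)
    moreover have "(-1::complex)^(h+k) * (-1)^(k-1) = (-1)^h'"
    proof -
      have "(-1::complex)^(h+k) * (-1)^(k-1) = (-1)^h' * ((-1)^k' * (-1)^k')"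
        unfolding h' k' by (simp add: power_add)
      then show ?thesis by (simp add: neg1_sq)
    qed
    ultimately show ?thesis using R True by simp
  next
    case False
    have "dA k h i l = 0" using False l h by (auto simp: dA_def)
    then show ?thesis using R False by simp
  qed
qed

lemma mmul_smult_r: "mmul k M (\<lambda>i j. c * X i j) i j = c * mmul k M X i j"
  unfolding mmul_def by (simp add: sum_distrib_left mult_ac)

lemma dPow_rel:
  assumes k: "k \<ge> 2" and h: "h \<in> {1..k}"
  shows "dPow k h s n i j = (-1)^(h+k) * mmul k (dPow k k s n) (mpow k (Acomp k s) (k-h)) i j"
proof (induction n arbitrary: i j)
  case 0
  then show ?case by (simp add: mmul_def)
next
  case (Suc n)
  let ?A = "Acomp k s" and ?P = "mpow k (Acomp k s) (k-h)" and ?c = "(-1::complex)^(h+k)"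
  have IH: "dPow k h s n = (\<lambda>i j. ?c * mmul k (dPow k k s n) ?P i j)" using Suc.IH by (intro ext)
  have T1: "mmul k (dA k h) (mpow k ?A n) i j = ?c * mmul k (mmul k (dA k k) (mpow k ?A n)) ?P i j"
  proof -
    have "mmul k (dA k h) (mpow k ?A n) i j = mmul k (\<lambda>i l. ?c * mmul k (dA k k) ?P i l) (mpow k ?A n) i j"
      by (rule mmul_cong) (auto simp: dA_rel[OF k h])
    also have "\<dots> = ?c * mmul k (mmul k (dA k k) ?P) (mpow k ?A n) i j" by (rule mmul_smult_l)
    also have "mmul k (mmul k (dA k k) ?P) (mpow k ?A n) i j = mmul k (dA k k) (mmul k ?P (mpow k ?A n)) i j"
      by (simp add: mmul_assoc)
    also have "\<dots> = mmul k (dA k k) (mmul k (mpow k ?A n) ?P) i j"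
      by (rule mmul_cong) (auto simp: mpow_comm)
    also have "\<dots> = mmul k (mmul k (dA k k) (mpow k ?A n)) ?P i j" by (simp add: mmul_assoc)
    finally show ?thesis .
  qed
  have T2: "mmul k ?A (dPow k h s n) i j = ?c * mmul k (mmul k ?A (dPow k k s n)) ?P i j"
    unfolding IH mmul_smult_r by (simp add: mmul_assoc)
  show ?case
    using T1 T2 by (simp add: mmul_add_l algebra_simps)
qed

lemma dB_split:
  assumes h: "h < k"
  shows "dB k h s i j = (-1)^h * of_nat (k-h) * mpow k (Acomp k s) (k-h-1) i j
      + (\<Sum>m<k. ((-1)^m * of_nat (k-m) * scoef s m) * dPow k h s (k-m-1) i j)"
proof -
  have "dB k h s i j = (\<Sum>m<k. (if m = h then (-1)^m * of_nat (k-m) * mpow k (Acomp k s) (k-m-1) i j else 0))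
      + (\<Sum>m<k. ((-1)^m * of_nat (k-m) * scoef s m) * dPow k h s (k-m-1) i j)"
    unfolding dB_def sum.distrib[symmetric] by (intro sum.cong refl) (auto simp: algebra_simps)
  then show ?thesis using h by simp
qed

lemma dB_k: "dB k k s = (\<lambda>i j. \<Sum>m<k. ((-1)^m * of_nat (k-m) * scoef s m) * dPow k k s (k-m-1) i j)"
  unfolding dB_def by (intro ext sum.cong refl) (auto simp: algebra_simps)

lemma K2:
  assumes k: "k \<ge> 2" and h: "h \<in> {1..k-1}"
  shows "(-1)^(k+h) * dB k h s i j = mmul k (dB k k s) (mpow k (Acomp k s) (k-h)) i j
      + (-1)^k * of_nat (k-h) * mpow k (Acomp k s) (k-h-1) i j"
proof -
  let ?P = "mpow k (Acomp k s) (k-h)"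
  have h': "h \<in> {1..k}" "h < k" using h by auto
  have sgn: "(-1::complex)^(k+h) * (-1)^(h+k) = 1" by (simp add: add.commute neg1_sq)
  have sgn2: "(-1::complex)^(k+h) * (-1)^h = (-1)^k" by (simp add: power_add mult.assoc neg1_sq)
  have "(-1)^(k+h) * dB k h s i j = (-1)^(k+h) * (-1)^h * of_nat (k-h) * mpow k (Acomp k s) (k-h-1) i j
      + (\<Sum>m<k. ((-1)^m * of_nat (k-m) * scoef s m) * ((-1)^(k+h) * dPow k h s (k-m-1) i j))"
    unfolding dB_split[OF h'(2)] by (simp add: algebra_simps sum_distrib_left)
  also have "(\<Sum>m<k. ((-1)^m * of_nat (k-m) * scoef s m) * ((-1)^(k+h) * dPow k h s (k-m-1) i j))
      = (\<Sum>m<k. ((-1)^m * of_nat (k-m) * scoef s m) * mmul k (dPow k k s (k-m-1)) ?P i j)"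
    by (intro sum.cong refl) (simp add: dPow_rel[OF k h'(1)] mult.assoc[symmetric] sgn)
  also have "\<dots> = mmul k (dB k k s) ?P i j"
    unfolding dB_k by (rule mmul_lin_l[symmetric])
  finally show ?thesis using sgn2 by simp
qed

lemma line_mvec:
  assumes "\<And>l. l \<in> {1..k} \<Longrightarrow> ((\<lambda>x. M (s(h:=x)) i l) has_field_derivative dM i l) (at (s h))"
      and "\<And>l. l \<in> {1..k} \<Longrightarrow> ((\<lambda>x. V (s(h:=x)) l) has_field_derivative dV l) (at (s h))"
  shows "((\<lambda>x. mvec k (M (s(h:=x))) (V (s(h:=x))) i) has_field_derivative (mvec k dM (V s) i + mvec k (M s) dV i)) (at (s h))"
proof -
  have "((\<lambda>x. \<Sum>l\<in>{1..k}. M (s(h:=x)) i l * V (s(h:=x)) l) has_field_derivative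
      (\<Sum>l\<in>{1..k}. dM i l * V (s(h:=s h)) l + dV l * M (s(h:=s h)) i l)) (at (s h))"
    by (intro DERIV_sum DERIV_mult assms) auto
  then show ?thesis unfolding mvec_def by (simp add: sum.distrib mult.commute)
qed

lemma holo_line: "holo_k k U F \<Longrightarrow> s \<in> U \<Longrightarrow> h \<in> {1..k} \<Longrightarrow> ((\<lambda>x. F (s(h:=x))) has_field_derivative pdiff h F s) (at (s h))"
  unfolding holo_k_def pdiff_def by (simp add: DERIV_deriv_iff_field_differentiable)

lemma pdiff_from: "((\<lambda>x. F (s(h:=x))) has_field_derivative D) (at (s h)) \<Longrightarrow> pdiff h F s = D"
  unfolding pdiff_def by (rule DERIV_imp_deriv)

lemma pdiff_local:
  assumes U: "admissible k U" and s: "s \<in> U" and h: "h \<in> {1..k}" and eq: "\<And>t. t \<in> U \<Longrightarrow> F t = G t"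
  shows "pdiff h F s = pdiff h G s"
  unfolding pdiff_def
  by (rule deriv_cong_ev[OF _ refl]) (use ev_line[OF U s h] eq in \<open>auto elim!: eventually_mono\<close>)

lemma mvec_smult_M: "mvec k (\<lambda>i j. c * M i j) v i = c * mvec k M v i"
  unfolding mvec_def by (simp add: sum_distrib_left mult_ac)

lemma mvec_add_M: "mvec k (\<lambda>i j. M i j + N i j) v i = mvec k M v i + mvec k N v i"
  unfolding mvec_def by (simp add: sum.distrib algebra_simps)

lemma mvec_diff_v: "mvec k M (\<lambda>l. a * u l - w l) i = a * mvec k M u i - mvec k M w i"
  unfolding mvec_def by (simp add: sum_subtractf sum_distrib_left algebra_simps)

lemma mvec_zero_v: "mvec k M (\<lambda>l. 0) i = 0"
  unfolding mvec_def by simp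

lemma alg1: "(c::complex) * x = y + z \<Longrightarrow> c * (x + u) - (y + w + z) = c * u - w"
proof -
  assume h: "c * x = y + z"
  have "c * (x + u) - (y + w + z) = (c * x - (y + z)) + (c * u - w)" by (simp add: algebra_simps)
  also have "c * x - (y + z) = 0" using h by simp
  finally show ?thesis by simp
qed

lemma core:
  assumes k: "k \<ge> 2" and h: "h \<in> {1..k-1}" and inv: "minvertible k (PderA k s)" and i: "i \<in> {1..k}"
    and dh: "\<And>l. l \<in> {1..k} \<Longrightarrow> ((\<lambda>x. \<Phi> (s(h:=x)) l) has_field_derivative Dh l) (at (s h))"
    and dk: "\<And>l. l \<in> {1..k} \<Longrightarrow> ((\<lambda>x. \<Phi> (s(k:=x)) l) has_field_derivative Dk l) (at (s k))"
  shows "(-1)^(k+h) * pdiff h (\<lambda>t. mvec k (PderA k t) (\<Phi> t) i) s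
      - (pdiff k (\<lambda>t. mvec k (mpow k (Acomp k t) (k-h)) (mvec k (PderA k t) (\<Phi> t)) i) s
         + (-1)^k * of_nat (k-h) * mvec k (mmul k (mpow k (Acomp k s) (k-h-1)) (minv k (PderA k s))) (mvec k (PderA k s) (\<Phi> s)) i)
    = mvec k (PderA k s) (\<lambda>l. (-1)^(k+h) * Dh l - (mvec k (dPow k k s (k-h)) (\<Phi> s) l + mvec k (mpow k (Acomp k s) (k-h)) Dk l)) i"
proof -
  let ?B = "PderA k s" and ?P = "mpow k (Acomp k s) (k-h)" and ?P' = "mpow k (Acomp k s) (k-h-1)" and ?C = "minv k (PderA k s)"
  have h1: "h \<in> {1..k}" using h by auto
  have kk: "k \<in> {1..k}" using k by auto
  define Yd where "Yd = (\<lambda>l. mvec k (dPow k k s (k-h)) (\<Phi> s) l + mvec k ?P Dk l)"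
  have a: "pdiff h (\<lambda>t. mvec k (PderA k t) (\<Phi> t) i) s = mvec k (dB k h s) (\<Phi> s) i + mvec k ?B Dh i"
    by (rule pdiff_from, rule line_mvec[where M="\<lambda>t. PderA k t" and V=\<Phi>]) (auto intro: dB_deriv[OF h1] dh)
  have b: "(\<lambda>t. mvec k (mpow k (Acomp k t) (k-h)) (mvec k (PderA k t) (\<Phi> t)) i)
      = (\<lambda>t. mvec k (PderA k t) (\<lambda>l. mvec k (mpow k (Acomp k t) (k-h)) (\<Phi> t) l) i)"
  proof (rule ext)
    fix t
    have "mvec k (mpow k (Acomp k t) (k-h)) (mvec k (PderA k t) (\<Phi> t)) i
        = mvec k (mmul k (mpow k (Acomp k t) (k-h)) (PderA k t)) (\<Phi> t) i" by (simp add: mvec_mmul)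
    also have "\<dots> = mvec k (mmul k (PderA k t) (mpow k (Acomp k t) (k-h))) (\<Phi> t) i"
    proof (rule mvec_cong[OF _ refl])
      fix l assume l: "l \<in> {1..k}"
      show "mmul k (mpow k (Acomp k t) (k-h)) (PderA k t) i l = mmul k (PderA k t) (mpow k (Acomp k t) (k-h)) i l"
        using PderA_comm[OF i l] by simp
    qed
    also have "\<dots> = mvec k (PderA k t) (\<lambda>l. mvec k (mpow k (Acomp k t) (k-h)) (\<Phi> t) l) i"
      by (simp add: mvec_mmul)
    finally show "mvec k (mpow k (Acomp k t) (k-h)) (mvec k (PderA k t) (\<Phi> t)) i
        = mvec k (PderA k t) (\<lambda>l. mvec k (mpow k (Acomp k t) (k-h)) (\<Phi> t) l) i" .
  qed
  have c: "\<And>l. l \<in> {1..k} \<Longrightarrow> ((\<lambda>x. mvec k (mpow k (Acomp k (s(k:=x))) (k-h)) (\<Phi> (s(k:=x))) l) has_field_derivative Yd l) (at (s k))"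
    unfolding Yd_def by (rule line_mvec[where M="\<lambda>t. mpow k (Acomp k t) (k-h)" and V=\<Phi>]) (auto intro: dPow_deriv[OF kk] dk)
  have d: "pdiff k (\<lambda>t. mvec k (PderA k t) (\<lambda>l. mvec k (mpow k (Acomp k t) (k-h)) (\<Phi> t) l) i) s
      = mvec k (dB k k s) (\<lambda>l. mvec k ?P (\<Phi> s) l) i + mvec k ?B Yd i"
    by (rule pdiff_from, rule line_mvec[where M="\<lambda>t. PderA k t" and V="\<lambda>t l. mvec k (mpow k (Acomp k t) (k-h)) (\<Phi> t) l"])
       (auto intro: dB_deriv[OF kk] c)
  have e: "mvec k (mmul k ?P' ?C) (mvec k ?B (\<Phi> s)) i = mvec k ?P' (\<Phi> s) i"
  proof -
    have "mvec k (mmul k ?P' ?C) (mvec k ?B (\<Phi> s)) i = mvec k ?P' (mvec k (mmul k ?C ?B) (\<Phi> s)) i"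
      by (simp add: mvec_mmul)
    also have "\<dots> = mvec k ?P' (\<Phi> s) i"
    proof (rule mvec_cong[OF refl])
      fix l assume l: "l \<in> {1..k}"
      have "mvec k (mmul k ?C ?B) (\<Phi> s) l = mvec k mid (\<Phi> s) l"
        by (rule mvec_cong) (use minv_is[OF inv] l in \<open>auto simp: is_minv_def\<close>)
      then show "mvec k (mmul k ?C ?B) (\<Phi> s) l = \<Phi> s l" using l by (simp add: mvec_mid)
    qed
    finally show ?thesis .
  qed
  have f: "(-1)^(k+h) * mvec k (dB k h s) (\<Phi> s) i
      = mvec k (dB k k s) (\<lambda>l. mvec k ?P (\<Phi> s) l) i + (-1)^k * of_nat (k-h) * mvec k ?P' (\<Phi> s) i"
  proof -
    have "(-1)^(k+h) * mvec k (dB k h s) (\<Phi> s) i = mvec k (\<lambda>i j. (-1)^(k+h) * dB k h s i j) (\<Phi> s) i"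
      by (simp add: mvec_smult_M)
    also have "\<dots> = mvec k (\<lambda>i j. mmul k (dB k k s) ?P i j + (-1)^k * of_nat (k-h) * ?P' i j) (\<Phi> s) i"
      using K2[OF k h] by simp
    also have "\<dots> = mvec k (mmul k (dB k k s) ?P) (\<Phi> s) i + (-1)^k * of_nat (k-h) * mvec k ?P' (\<Phi> s) i"
      by (simp add: mvec_add_M mvec_smult_M)
    also have "mvec k (mmul k (dB k k s) ?P) (\<Phi> s) i = mvec k (dB k k s) (\<lambda>l. mvec k ?P (\<Phi> s) l) i"
      by (simp add: mvec_mmul)
    finally show ?thesis .
  qed
  have g: "mvec k ?B (\<lambda>l. (-1)^(k+h) * Dh l - (mvec k (dPow k k s (k-h)) (\<Phi> s) l + mvec k ?P Dk l)) i
      = (-1)^(k+h) * mvec k ?B Dh i - mvec k ?B Yd i"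
    unfolding Yd_def by (rule mvec_diff_v)
  show ?thesis
    unfolding a b d e g by (rule alg1[OF f])
qed

lemma sol_A_facts:
  assumes "sol_A k U \<Phi>"
  shows "admissible k U" "\<And>i. i \<in> {1..k} \<Longrightarrow> holo_k k U (\<lambda>s. \<Phi> s i)"
    "\<And>s h i. s \<in> U \<Longrightarrow> h \<in> {1..k-1} \<Longrightarrow> i \<in> {1..k} \<Longrightarrow>
      (-1) ^ (k + h) * pdiff h (\<lambda>t. \<Phi> t i) s = pdiff k (\<lambda>t. mvec k (mpow k (Acomp k t) (k - h)) (\<Phi> t) i) s"
  using assms unfolding sol_A_def by auto

lemma sol_AA_facts:
  assumes "sol_AA k U \<Psi>"
  shows "admissible k U" "\<And>i. i \<in> {1..k} \<Longrightarrow> holo_k k U (\<lambda>s. \<Psi> s i)"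
    "\<And>s h i. s \<in> U \<Longrightarrow> h \<in> {1..k-1} \<Longrightarrow> i \<in> {1..k} \<Longrightarrow>
      (-1) ^ (k + h) * pdiff h (\<lambda>t. \<Psi> t i) s =
          pdiff k (\<lambda>t. mvec k (mpow k (Acomp k t) (k - h)) (\<Psi> t) i) s
          + (-1) ^ k * of_nat (k - h) *
            mvec k (mmul k (mpow k (Acomp k s) (k - h - 1)) (minv k (PderA k s))) (\<Psi> s) i"
  using assms unfolding sol_AA_def by auto

lemma Yd_eq:
  assumes k: "k \<ge> 2" and hol: "\<And>l. l \<in> {1..k} \<Longrightarrow> holo_k k U (\<lambda>s. \<Phi> s l)" and s: "s \<in> U" and l: "l \<in> {1..k}"
  shows "pdiff k (\<lambda>t. mvec k (mpow k (Acomp k t) n) (\<Phi> t) l) s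
       = mvec k (dPow k k s n) (\<Phi> s) l + mvec k (mpow k (Acomp k s) n) (\<lambda>l. pdiff k (\<lambda>t. \<Phi> t l) s) l"
proof -
  have kk: "k \<in> {1..k}" using k by auto
  show ?thesis
    by (rule pdiff_from, rule line_mvec[where M="\<lambda>t. mpow k (Acomp k t) n" and V=\<Phi>])
       (auto intro: dPow_deriv[OF kk] holo_line[OF hol s kk, simplified])
qed

lemma part3:
  assumes k: "k \<ge> 2" and sol: "sol_A k U \<Phi>"
  shows "sol_AA k U (\<lambda>s. mvec k (PderA k s) (\<Phi> s))"
proof -
  note U = sol_A_facts(1)[OF sol] and hol = sol_A_facts(2)[OF sol] and eq = sol_A_facts(3)[OF sol]
  have kk: "k \<in> {1..k}" using k by auto
  show ?thesis unfolding sol_AA_def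
  proof (intro conjI ballI)
    show "admissible k U" by (rule U)
    fix i assume i: "i \<in> {1..k}"
    show "holo_k k U (\<lambda>s. mvec k (PderA k s) (\<Phi> s) i)"
      by (rule holo_k_mvec) (auto intro: holo_k_goodf goodf_PderA hol)
  next
    fix s h i assume s: "s \<in> U" and h: "h \<in> {1..k-1}" and i: "i \<in> {1..k}"
    have h1: "h \<in> {1..k}" using h by auto
    have dh: "\<And>l. l \<in> {1..k} \<Longrightarrow> ((\<lambda>x. \<Phi> (s(h:=x)) l) has_field_derivative pdiff h (\<lambda>t. \<Phi> t l) s) (at (s h))"
      using holo_line[OF hol s h1] by simp
    have dk: "\<And>l. l \<in> {1..k} \<Longrightarrow> ((\<lambda>x. \<Phi> (s(k:=x)) l) has_field_derivative pdiff k (\<lambda>t. \<Phi> t l) s) (at (s k))"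
      using holo_line[OF hol s kk] by simp
    have zero: "mvec k (PderA k s) (\<lambda>l. (-1)^(k+h) * pdiff h (\<lambda>t. \<Phi> t l) s - (mvec k (dPow k k s (k-h)) (\<Phi> s) l
        + mvec k (mpow k (Acomp k s) (k-h)) (\<lambda>l. pdiff k (\<lambda>t. \<Phi> t l) s) l)) i = 0"
    proof -
      have "mvec k (PderA k s) (\<lambda>l. (-1)^(k+h) * pdiff h (\<lambda>t. \<Phi> t l) s - (mvec k (dPow k k s (k-h)) (\<Phi> s) l
        + mvec k (mpow k (Acomp k s) (k-h)) (\<lambda>l. pdiff k (\<lambda>t. \<Phi> t l) s) l)) i = mvec k (PderA k s) (\<lambda>l. 0) i"
      proof (rule mvec_cong[OF refl])
        fix l assume l: "l \<in> {1..k}"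
        have "mvec k (dPow k k s (k-h)) (\<Phi> s) l + mvec k (mpow k (Acomp k s) (k-h)) (\<lambda>l. pdiff k (\<lambda>t. \<Phi> t l) s) l
          = pdiff k (\<lambda>t. mvec k (mpow k (Acomp k t) (k-h)) (\<Phi> t) l) s"
          by (rule Yd_eq[OF k hol s l, symmetric])
        then show "(-1)^(k+h) * pdiff h (\<lambda>t. \<Phi> t l) s - (mvec k (dPow k k s (k-h)) (\<Phi> s) l
          + mvec k (mpow k (Acomp k s) (k-h)) (\<lambda>l. pdiff k (\<lambda>t. \<Phi> t l) s) l) = 0"
          using eq[OF s h l] by simp
      qed
      then show ?thesis by (simp add: mvec_zero_v)
    qed
    have "(-1)^(k+h) * pdiff h (\<lambda>t. mvec k (PderA k t) (\<Phi> t) i) s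
      - (pdiff k (\<lambda>t. mvec k (mpow k (Acomp k t) (k-h)) (mvec k (PderA k t) (\<Phi> t)) i) s
         + (-1)^k * of_nat (k-h) * mvec k (mmul k (mpow k (Acomp k s) (k-h-1)) (minv k (PderA k s))) (mvec k (PderA k s) (\<Phi> s)) i) = 0"
      using core[OF k h adm_invertible[OF k U s] i dh dk] zero by simp
    then show "(-1)^(k+h) * pdiff h (\<lambda>t. mvec k (PderA k t) (\<Phi> t) i) s
      = pdiff k (\<lambda>t. mvec k (mpow k (Acomp k t) (k-h)) (mvec k (PderA k t) (\<Phi> t)) i) s
         + (-1)^k * of_nat (k-h) * mvec k (mmul k (mpow k (Acomp k s) (k-h-1)) (minv k (PderA k s))) (mvec k (PderA k s) (\<Phi> s)) i"
      by simp
  qed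
qed

lemma A_B_comm:
  assumes i: "i \<in> {1..k}" and j: "j \<in> {1..k}"
  shows "mmul k (PderA k s) (Acomp k s) i j = mmul k (Acomp k s) (PderA k s) i j"
proof -
  have "mmul k (PderA k s) (Acomp k s) i j = mmul k (PderA k s) (mpow k (Acomp k s) 1) i j"
    by (rule mmul_cong[OF refl]) (rule mpow_one[OF j, symmetric])
  also have "\<dots> = mmul k (mpow k (Acomp k s) 1) (PderA k s) i j" by (rule PderA_comm[OF i j])
  also have "\<dots> = mmul k (Acomp k s) (PderA k s) i j"
    by (rule mmul_cong[OF _ refl]) (rule mpow_one)
  finally show ?thesis .
qed

lemma alg2: "(c::complex) * x = a \<Longrightarrow> c * y = b + d * w \<Longrightarrow> c * (x + y) = (a + b) + d * w"
  by (simp add: distrib_left)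

lemma part2:
  assumes k: "k \<ge> 2" and sol: "sol_AA k U \<Psi>"
  shows "sol_AA k U (\<lambda>s. mvec k (Acomp k s) (\<Psi> s))"
proof -
  note U = sol_AA_facts(1)[OF sol] and hol = sol_AA_facts(2)[OF sol] and eq = sol_AA_facts(3)[OF sol]
  have kk: "k \<in> {1..k}" using k by auto
  show ?thesis unfolding sol_AA_def
  proof (intro conjI ballI)
    show "admissible k U" by (rule U)
  next
    fix i assume i: "i \<in> {1..k}"
    show "holo_k k U (\<lambda>s. mvec k (Acomp k s) (\<Psi> s) i)"
      by (rule holo_k_mvec) (auto intro: holo_k_goodf goodf_Acomp hol)
  next
    fix s h i assume s: "s \<in> U" and h: "h \<in> {1..k-1}" and i: "i \<in> {1..k}"
    have h1: "h \<in> {1..k}" using h by auto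
    let ?A = "Acomp k s" and ?P = "mpow k (Acomp k s) (k-h)" and ?P' = "mpow k (Acomp k s) (k-h-1)"
      and ?C = "minv k (PderA k s)"
    define sg :: complex where "sg = (-1)^(k+h)"
    define c :: complex where "c = (-1)^k * of_nat (k-h)"
    have sgsg: "sg * sg = 1" unfolding sg_def by (rule neg1_sq)
    have inv: "minvertible k (PderA k s)" by (rule adm_invertible[OF k U s])
    define dH where "dH = (\<lambda>l. pdiff h (\<lambda>t. \<Psi> t l) s)"
    define dK where "dK = (\<lambda>l. pdiff k (\<lambda>t. \<Psi> t l) s)"
    have dh: "\<And>l. l \<in> {1..k} \<Longrightarrow> ((\<lambda>x. \<Psi> (s(h:=x)) l) has_field_derivative dH l) (at (s h))"
      using holo_line[OF hol s h1] by (simp add: dH_def)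
    have dk: "\<And>l. l \<in> {1..k} \<Longrightarrow> ((\<lambda>x. \<Psi> (s(k:=x)) l) has_field_derivative dK l) (at (s k))"
      using holo_line[OF hol s kk] by (simp add: dK_def)
    define ZdE where "ZdE = (\<lambda>l. mvec k (dPow k k s (k-h)) (\<Psi> s) l + mvec k ?P dK l)"
    have Zder: "\<And>l. l \<in> {1..k} \<Longrightarrow> ((\<lambda>x. mvec k (mpow k (Acomp k (s(k:=x))) (k-h)) (\<Psi> (s(k:=x))) l) has_field_derivative ZdE l) (at (s k))"
      unfolding ZdE_def by (rule line_mvec[where M="\<lambda>t. mpow k (Acomp k t) (k-h)" and V=\<Psi>]) (auto intro: dPow_deriv[OF kk] dk)
    have Zp: "\<And>l. l \<in> {1..k} \<Longrightarrow> pdiff k (\<lambda>t. mvec k (mpow k (Acomp k t) (k-h)) (\<Psi> t) l) s = ZdE l"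
      by (rule pdiff_from) (rule Zder)
    define W where "W = (\<lambda>l. mvec k (mmul k ?P' ?C) (\<Psi> s) l)"
    have hyp: "\<And>l. l \<in> {1..k} \<Longrightarrow> dH l = sg * (ZdE l + c * W l)"
    proof -
      fix l assume l: "l \<in> {1..k}"
      have "sg * dH l = ZdE l + c * W l" using eq[OF s h l] Zp[OF l] unfolding sg_def c_def dH_def W_def by simp
      then have "sg * (sg * dH l) = sg * (ZdE l + c * W l)" by simp
      then show "dH l = sg * (ZdE l + c * W l)" using sgsg by (simp add: mult.assoc[symmetric])
    qed
    have L: "pdiff h (\<lambda>t. mvec k (Acomp k t) (\<Psi> t) i) s = mvec k (dA k h) (\<Psi> s) i + mvec k ?A dH i"
      by (rule pdiff_from, rule line_mvec[where M="\<lambda>t. Acomp k t" and V=\<Psi>]) (auto intro: dA_deriv[OF h1] dh)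
    have F: "(\<lambda>t. mvec k (mpow k (Acomp k t) (k-h)) (mvec k (Acomp k t) (\<Psi> t)) i)
        = (\<lambda>t. mvec k (Acomp k t) (\<lambda>l. mvec k (mpow k (Acomp k t) (k-h)) (\<Psi> t) l) i)"
    proof (rule ext)
      fix t
      have "mvec k (mpow k (Acomp k t) (k-h)) (mvec k (Acomp k t) (\<Psi> t)) i
          = mvec k (mmul k (mpow k (Acomp k t) (k-h)) (Acomp k t)) (\<Psi> t) i" by (simp add: mvec_mmul)
      also have "\<dots> = mvec k (mmul k (Acomp k t) (mpow k (Acomp k t) (k-h))) (\<Psi> t) i"
      proof (rule mvec_cong[OF _ refl])
        fix l assume l: "l \<in> {1..k}"
        show "mmul k (mpow k (Acomp k t) (k-h)) (Acomp k t) i l = mmul k (Acomp k t) (mpow k (Acomp k t) (k-h)) i l"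
          by (rule mpow_comm1[OF i l, symmetric])
      qed
      also have "\<dots> = mvec k (Acomp k t) (\<lambda>l. mvec k (mpow k (Acomp k t) (k-h)) (\<Psi> t) l) i"
        by (simp add: mvec_mmul)
      finally show "mvec k (mpow k (Acomp k t) (k-h)) (mvec k (Acomp k t) (\<Psi> t)) i
          = mvec k (Acomp k t) (\<lambda>l. mvec k (mpow k (Acomp k t) (k-h)) (\<Psi> t) l) i" .
    qed
    have R1: "pdiff k (\<lambda>t. mvec k (Acomp k t) (\<lambda>l. mvec k (mpow k (Acomp k t) (k-h)) (\<Psi> t) l) i) s
        = mvec k (dA k k) (\<lambda>l. mvec k ?P (\<Psi> s) l) i + mvec k ?A ZdE i"
      by (rule pdiff_from, rule line_mvec[where M="\<lambda>t. Acomp k t" and V="\<lambda>t l. mvec k (mpow k (Acomp k t) (k-h)) (\<Psi> t) l"])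
         (auto intro: dA_deriv[OF kk] Zder)
    have T1: "sg * mvec k (dA k h) (\<Psi> s) i = mvec k (dA k k) (\<lambda>l. mvec k ?P (\<Psi> s) l) i"
    proof -
      have "sg * mvec k (dA k h) (\<Psi> s) i = mvec k (\<lambda>i l. sg * dA k h i l) (\<Psi> s) i" by (simp add: mvec_smult_M)
      also have "\<dots> = mvec k (mmul k (dA k k) ?P) (\<Psi> s) i"
      proof (rule mvec_cong[OF _ refl])
        fix l assume l: "l \<in> {1..k}"
        have "sg * dA k h i l = (sg * (-1)^(h+k)) * mmul k (dA k k) ?P i l"
          by (simp add: dA_rel[OF k h1 l] mult.assoc)
        also have "sg * (-1)^(h+k) = 1" unfolding sg_def by (simp add: add.commute neg1_sq)
        finally show "sg * dA k h i l = mmul k (dA k k) ?P i l" by simp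
      qed
      also have "\<dots> = mvec k (dA k k) (\<lambda>l. mvec k ?P (\<Psi> s) l) i" by (simp add: mvec_mmul)
      finally show ?thesis .
    qed
    have T3: "mvec k ?A W i = mvec k (mmul k ?P' ?C) (mvec k ?A (\<Psi> s)) i"
    proof -
      have "mvec k ?A W i = mvec k (mmul k ?A (mmul k ?P' ?C)) (\<Psi> s) i" unfolding W_def by (simp add: mvec_mmul)
      also have "\<dots> = mvec k (mmul k (mmul k ?P' ?C) ?A) (\<Psi> s) i"
      proof (rule mvec_cong[OF _ refl])
        fix l assume l: "l \<in> {1..k}"
        have "mmul k ?A (mmul k ?P' ?C) i l = mmul k (mmul k ?A ?P') ?C i l" by (simp add: mmul_assoc)
        also have "\<dots> = mmul k (mmul k ?P' ?A) ?C i l"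
          by (rule mmul_cong[OF _ refl]) (rule mpow_comm1[OF i])
        also have "\<dots> = mmul k ?P' (mmul k ?A ?C) i l" by (simp add: mmul_assoc)
        also have "\<dots> = mmul k ?P' (mmul k ?C ?A) i l"
        proof (rule mmul_cong[OF refl])
          fix m assume m: "m \<in> {1..k}"
          show "mmul k ?A ?C m l = mmul k ?C ?A m l"
            by (rule minv_comm[OF minv_is[OF inv] A_B_comm m l, symmetric])
        qed
        also have "\<dots> = mmul k (mmul k ?P' ?C) ?A i l" by (simp add: mmul_assoc)
        finally show "mmul k ?A (mmul k ?P' ?C) i l = mmul k (mmul k ?P' ?C) ?A i l" .
      qed
      also have "\<dots> = mvec k (mmul k ?P' ?C) (mvec k ?A (\<Psi> s)) i" by (simp add: mvec_mmul)
      finally show ?thesis .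
    qed
    have T2: "sg * mvec k ?A dH i = mvec k ?A ZdE i + c * mvec k (mmul k ?P' ?C) (mvec k ?A (\<Psi> s)) i"
    proof -
      have "mvec k ?A dH i = mvec k ?A (\<lambda>l. sg * (ZdE l + c * W l)) i"
        by (rule mvec_cong[OF refl]) (rule hyp)
      also have "\<dots> = sg * (mvec k ?A ZdE i + c * mvec k ?A W i)"
        unfolding mvec_def by (simp add: sum_distrib_left sum.distrib algebra_simps)
      finally have "sg * mvec k ?A dH i = (sg * sg) * (mvec k ?A ZdE i + c * mvec k ?A W i)" by (simp add: mult.assoc)
      then show ?thesis using sgsg T3 by simp
    qed
    show "(-1)^(k+h) * pdiff h (\<lambda>t. mvec k (Acomp k t) (\<Psi> t) i) s
      = pdiff k (\<lambda>t. mvec k (mpow k (Acomp k t) (k-h)) (mvec k (Acomp k t) (\<Psi> t)) i) s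
        + (-1)^k * of_nat (k-h) * mvec k (mmul k ?P' ?C) (mvec k ?A (\<Psi> s)) i"
      unfolding L F R1 sg_def[symmetric] c_def[symmetric] by (rule alg2[OF T1 T2])
  qed
qed

lemma part4:
  assumes k: "k \<ge> 2" and sol: "sol_AA k (Ck k - DiscSet k) \<Psi>"
  shows "sol_A k (Ck k - DiscSet k) (\<lambda>s. mvec k (minv k (PderA k s)) (\<Psi> s))"
proof -
  define U where "U = Ck k - DiscSet k"
  have U: "admissible k U" unfolding U_def by (rule admissible_main[OF k])
  have sol': "sol_AA k U \<Psi>" using sol by (simp add: U_def)
  note hol = sol_AA_facts(2)[OF sol'] and eq = sol_AA_facts(3)[OF sol']
  define \<Phi> where "\<Phi> = (\<lambda>s. mvec k (minv k (PderA k s)) (\<Psi> s))"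
  have kk: "k \<in> {1..k}" using k by auto
  have holPhi: "\<And>l. l \<in> {1..k} \<Longrightarrow> holo_k k U (\<lambda>s. \<Phi> s l)"
    unfolding \<Phi>_def by (rule holo_k_mvec) (auto intro: holo_minv[OF k U] hol)
  have bk: "\<And>t l. t \<in> U \<Longrightarrow> l \<in> {1..k} \<Longrightarrow> mvec k (PderA k t) (\<Phi> t) l = \<Psi> t l"
  proof -
    fix t l assume t: "t \<in> U" and l: "l \<in> {1..k}"
    have inv: "minvertible k (PderA k t)" by (rule adm_invertible[OF k U t])
    have "mvec k (PderA k t) (\<Phi> t) l = mvec k (mmul k (PderA k t) (minv k (PderA k t))) (\<Psi> t) l"
      unfolding \<Phi>_def by (simp add: mvec_mmul)
    also have "\<dots> = mvec k mid (\<Psi> t) l"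
      by (rule mvec_cong) (use minv_is[OF inv] l in \<open>auto simp: is_minv_def\<close>)
    also have "\<dots> = \<Psi> t l" using l by (simp add: mvec_mid)
    finally show "mvec k (PderA k t) (\<Phi> t) l = \<Psi> t l" .
  qed
  have main: "(-1)^(k+h) * pdiff h (\<lambda>t. \<Phi> t i) s = pdiff k (\<lambda>t. mvec k (mpow k (Acomp k t) (k-h)) (\<Phi> t) i) s"
    if s: "s \<in> U" and h: "h \<in> {1..k-1}" and i: "i \<in> {1..k}" for s h i
  proof -
    have h1: "h \<in> {1..k}" using h by auto
    have inv: "minvertible k (PderA k s)" by (rule adm_invertible[OF k U s])
    have dh: "\<And>l. l \<in> {1..k} \<Longrightarrow> ((\<lambda>x. \<Phi> (s(h:=x)) l) has_field_derivative pdiff h (\<lambda>t. \<Phi> t l) s) (at (s h))"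
      using holo_line[OF holPhi s h1] by simp
    have dk: "\<And>l. l \<in> {1..k} \<Longrightarrow> ((\<lambda>x. \<Phi> (s(k:=x)) l) has_field_derivative pdiff k (\<lambda>t. \<Phi> t l) s) (at (s k))"
      using holo_line[OF holPhi s kk] by simp
    define D where "D = (\<lambda>l. (-1)^(k+h) * pdiff h (\<lambda>t. \<Phi> t l) s - (mvec k (dPow k k s (k-h)) (\<Phi> s) l
        + mvec k (mpow k (Acomp k s) (k-h)) (\<lambda>l. pdiff k (\<lambda>t. \<Phi> t l) s) l))"
    have BD: "mvec k (PderA k s) D j = 0" if j: "j \<in> {1..k}" for j
    proof -
      have c: "(-1)^(k+h) * pdiff h (\<lambda>t. mvec k (PderA k t) (\<Phi> t) j) s
        - (pdiff k (\<lambda>t. mvec k (mpow k (Acomp k t) (k-h)) (mvec k (PderA k t) (\<Phi> t)) j) s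
         + (-1)^k * of_nat (k-h) * mvec k (mmul k (mpow k (Acomp k s) (k-h-1)) (minv k (PderA k s))) (mvec k (PderA k s) (\<Phi> s)) j)
        = mvec k (PderA k s) D j"
        unfolding D_def by (rule core[OF k h inv j dh dk])
      have e1: "pdiff h (\<lambda>t. mvec k (PderA k t) (\<Phi> t) j) s = pdiff h (\<lambda>t. \<Psi> t j) s"
        by (rule pdiff_local[OF U s h1]) (use bk j in blast)
      have e2: "pdiff k (\<lambda>t. mvec k (mpow k (Acomp k t) (k-h)) (mvec k (PderA k t) (\<Phi> t)) j) s
          = pdiff k (\<lambda>t. mvec k (mpow k (Acomp k t) (k-h)) (\<Psi> t) j) s"
        by (rule pdiff_local[OF U s kk]) (rule mvec_cong[OF refl], simp add: bk)
      have e3: "mvec k (mmul k (mpow k (Acomp k s) (k-h-1)) (minv k (PderA k s))) (mvec k (PderA k s) (\<Phi> s)) j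
          = mvec k (mmul k (mpow k (Acomp k s) (k-h-1)) (minv k (PderA k s))) (\<Psi> s) j"
        by (rule mvec_cong[OF refl]) (simp add: bk s)
      show ?thesis using c eq[OF s h j] unfolding e1 e2 e3 by simp
    qed
    have "D i = 0"
    proof -
      have "D i = mvec k mid D i" using i by (simp add: mvec_mid)
      also have "\<dots> = mvec k (mmul k (minv k (PderA k s)) (PderA k s)) D i"
        by (rule mvec_cong) (use minv_is[OF inv] i in \<open>auto simp: is_minv_def\<close>)
      also have "\<dots> = mvec k (minv k (PderA k s)) (\<lambda>l. 0) i"
        unfolding mvec_mmul by (rule mvec_cong[OF refl]) (simp add: BD)
      also have "\<dots> = 0" by (rule mvec_zero_v)
      finally show ?thesis .
    qed
    then show ?thesis unfolding D_def using Yd_eq[OF k holPhi s i, where n="k-h"] by simp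
  qed
  show ?thesis
    unfolding sol_A_def U_def[symmetric] \<Phi>_def[symmetric]
    using U holPhi main by blast
qed

lemma hol_poly [holomorphic_intros]: "(\<lambda>z. poly p (f z)) holomorphic_on S" if "f holomorphic_on S" for p :: "complex poly"
  using that by (rule holomorphic_on_compose[unfolded o_def, OF _ holomorphic_on_subset[of "poly p" UNIV]])
    (auto simp: holomorphic_on_def field_differentiable_def intro: has_field_derivative_at_within poly_DERIV)

definition Rb :: "nat \<Rightarrow> (nat \<Rightarrow> complex) \<Rightarrow> real" where
  "Rb k s = 1 + (\<Sum>h\<in>{1..k}. cmod (s h))"

lemma Rb_ge1: "Rb k s \<ge> 1"
  unfolding Rb_def by (simp add: sum_nonneg)

lemma root_bound:
  assumes k: "k \<ge> 1" and z: "poly (Ppoly k s) z = 0"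
  shows "cmod z < Rb k s"
proof (cases "cmod z < 1")
  case True
  then show ?thesis using Rb_ge1[of k s] by linarith
next
  case False
  let ?S = "\<Sum>h\<in>{1..k}. cmod (s h)"
  have zk: "z^k = - (\<Sum>h=1..k. (-1)^h * s h * z^(k-h))"
    using z unfolding poly_Ppoly_split by (simp add: add_eq_0_iff)
  have "cmod z ^ k = cmod (\<Sum>h=1..k. (-1)^h * s h * z^(k-h))"
    using zk by (metis norm_minus_cancel norm_power)
  also have "\<dots> \<le> (\<Sum>h=1..k. cmod ((-1)^h * s h * z^(k-h)))" by (rule norm_sum)
  also have "\<dots> = (\<Sum>h=1..k. cmod (s h) * cmod z ^ (k-h))" by (simp add: norm_mult norm_power)
  also have "\<dots> \<le> (\<Sum>h=1..k. cmod (s h) * cmod z ^ (k-1))"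
    by (intro sum_mono mult_left_mono power_increasing) (use False in auto)
  also have "\<dots> = ?S * cmod z^(k-1)" by (simp add: sum_distrib_right)
  finally have A: "cmod z * cmod z^(k-1) \<le> ?S * cmod z^(k-1)"
    using k by (cases k) auto
  have "cmod z \<ge> 1" using False by simp
  then have "cmod z^(k-1) > 0" by (intro zero_less_power) linarith
  then have "cmod z \<le> ?S" using A by simp
  then show ?thesis unfolding Rb_def by linarith
qed

definition IC :: "nat \<Rightarrow> (complex \<Rightarrow> complex) \<Rightarrow> (nat \<Rightarrow> complex) \<Rightarrow> real \<Rightarrow> complex" where
  "IC k g s R = contour_integral (circlepath 0 R) (\<lambda>\<zeta>. g \<zeta> / poly (Ppoly k s) \<zeta>)"

lemma roots_finite: "finite {z. poly (Ppoly k s) z = 0}"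
  by (rule poly_roots_finite[OF Ppoly_nz])

lemma circle_noroot:
  assumes R: "\<And>z. poly (Ppoly k s) z = 0 \<Longrightarrow> cmod z < R"
  shows "path_image (circlepath 0 R) \<subseteq> - {z. poly (Ppoly k s) z = 0}"
proof
  fix w assume "w \<in> path_image (circlepath 0 R)"
  then have "cmod w = \<bar>R\<bar>" by (simp add: dist_norm)
  then show "w \<in> - {z. poly (Ppoly k s) z = 0}" using R by force
qed

lemma IC_residue:
  assumes g: "g holomorphic_on UNIV" and R: "\<And>z. poly (Ppoly k s) z = 0 \<Longrightarrow> cmod z < R"
  shows "IC k g s R = complex_of_real (2 * pi) * \<i> * (\<Sum>p\<in>{z. poly (Ppoly k s) z = 0}. residue (\<lambda>\<zeta>. g \<zeta> / poly (Ppoly k s) \<zeta>) p)"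
proof -
  let ?pts = "{z. poly (Ppoly k s) z = 0}"
  have hol: "(\<lambda>\<zeta>. g \<zeta> / poly (Ppoly k s) \<zeta>) holomorphic_on UNIV - ?pts"
    by (intro holomorphic_intros holomorphic_on_subset[OF g]) auto
  have "IC k g s R = complex_of_real (2 * pi) * \<i> * (\<Sum>p\<in>?pts. winding_number (circlepath 0 R) p * residue (\<lambda>\<zeta>. g \<zeta> / poly (Ppoly k s) \<zeta>) p)"
    unfolding IC_def
    by (rule Residue_theorem[OF open_UNIV connected_UNIV roots_finite hol]) (use circle_noroot[OF R] in auto)
  also have "(\<Sum>p\<in>?pts. winding_number (circlepath 0 R) p * residue (\<lambda>\<zeta>. g \<zeta> / poly (Ppoly k s) \<zeta>) p)
      = (\<Sum>p\<in>?pts. residue (\<lambda>\<zeta>. g \<zeta> / poly (Ppoly k s) \<zeta>) p)"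
    by (intro sum.cong refl) (simp add: winding_number_circlepath R)
  finally show ?thesis .
qed

lemma IC_indep:
  assumes g: "g holomorphic_on UNIV" and R1: "\<And>z. poly (Ppoly k s) z = 0 \<Longrightarrow> cmod z < R1"
    and R2: "\<And>z. poly (Ppoly k s) z = 0 \<Longrightarrow> cmod z < R2"
  shows "IC k g s R1 = IC k g s R2"
  using IC_residue[OF g R1] IC_residue[OF g R2] by simp

lemma IC_integrable:
  assumes g: "g holomorphic_on UNIV" and R: "\<And>z. poly (Ppoly k s) z = 0 \<Longrightarrow> cmod z < R"
  shows "(\<lambda>\<zeta>. g \<zeta> / poly (Ppoly k s) \<zeta>) contour_integrable_on (circlepath 0 R)"
proof (rule contour_integrable_holomorphic_simple)
  show "(\<lambda>\<zeta>. g \<zeta> / poly (Ppoly k s) \<zeta>) holomorphic_on - {z. poly (Ppoly k s) z = 0}"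
    by (intro holomorphic_intros holomorphic_on_subset[OF g]) auto
  show "open (- {z. poly (Ppoly k s) z = 0})" using roots_finite finite_imp_closed by blast
qed (use circle_noroot[OF R] in auto)

lemma mvec_IC:
  assumes f: "f holomorphic_on UNIV" and q: "q holomorphic_on UNIV" and W: "W holomorphic_on UNIV"
    and rel: "\<And>\<zeta>. (\<Sum>l\<in>{1..k}. M i l * \<zeta>^(l-1)) = q \<zeta> * \<zeta>^(i-1) - poly (Ppoly k s) \<zeta> * W \<zeta>"
    and R: "\<And>z. poly (Ppoly k s) z = 0 \<Longrightarrow> cmod z < R"
  shows "mvec k M (\<lambda>l. IC k (\<lambda>\<zeta>. f \<zeta> * \<zeta>^(l-1)) s R) i = IC k (\<lambda>\<zeta>. f \<zeta> * q \<zeta> * \<zeta>^(i-1)) s R"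
proof -
  let ?g = "circlepath 0 R" and ?P = "\<lambda>\<zeta>. poly (Ppoly k s) \<zeta>"
  have int: "\<And>l. (\<lambda>\<zeta>. f \<zeta> * \<zeta>^(l-1) / ?P \<zeta>) contour_integrable_on ?g"
    by (rule IC_integrable[OF _ R]) (intro holomorphic_intros f)
  have "mvec k M (\<lambda>l. IC k (\<lambda>\<zeta>. f \<zeta> * \<zeta>^(l-1)) s R) i
      = (\<Sum>l\<in>{1..k}. contour_integral ?g (\<lambda>\<zeta>. M i l * (f \<zeta> * \<zeta>^(l-1) / ?P \<zeta>)))"
    unfolding mvec_def IC_def by (intro sum.cong refl) (rule contour_integral_lmul[OF int, symmetric])
  also have "\<dots> = contour_integral ?g (\<lambda>\<zeta>. \<Sum>l\<in>{1..k}. M i l * (f \<zeta> * \<zeta>^(l-1) / ?P \<zeta>))"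
  proof (rule contour_integral_sum[symmetric])
    fix l show "(\<lambda>\<zeta>. M i l * (f \<zeta> * \<zeta>^(l-1) / ?P \<zeta>)) contour_integrable_on ?g"
      by (rule contour_integrable_lmul[OF int])
  qed simp
  also have "\<dots> = contour_integral ?g (\<lambda>\<zeta>. f \<zeta> * q \<zeta> * \<zeta>^(i-1) / ?P \<zeta> - f \<zeta> * W \<zeta>)"
  proof (rule contour_integral_eq)
    fix \<zeta> assume z: "\<zeta> \<in> path_image ?g"
    have P0: "?P \<zeta> \<noteq> 0"
    proof
      assume "?P \<zeta> = 0"
      then have "cmod \<zeta> < R" by (rule R)
      moreover have "cmod \<zeta> = \<bar>R\<bar>" using z by (simp add: dist_norm)
      ultimately show False by simp
    qed
    have "(\<Sum>l\<in>{1..k}. M i l * (f \<zeta> * \<zeta>^(l-1) / ?P \<zeta>)) = f \<zeta> * (\<Sum>l\<in>{1..k}. M i l * \<zeta>^(l-1)) / ?P \<zeta>"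
      by (simp add: sum_distrib_left sum_divide_distrib mult_ac)
    also have "\<dots> = f \<zeta> * (q \<zeta> * \<zeta>^(i-1) - ?P \<zeta> * W \<zeta>) / ?P \<zeta>" using rel[of \<zeta>] by simp
    also have "\<dots> = f \<zeta> * q \<zeta> * \<zeta>^(i-1) / ?P \<zeta> - f \<zeta> * W \<zeta>" using P0 by (simp add: field_simps)
    finally show "(\<Sum>l\<in>{1..k}. M i l * (f \<zeta> * \<zeta>^(l-1) / ?P \<zeta>)) = f \<zeta> * q \<zeta> * \<zeta>^(i-1) / ?P \<zeta> - f \<zeta> * W \<zeta>" .
  qed
  also have "\<dots> = contour_integral ?g (\<lambda>\<zeta>. f \<zeta> * q \<zeta> * \<zeta>^(i-1) / ?P \<zeta>) - contour_integral ?g (\<lambda>\<zeta>. f \<zeta> * W \<zeta>)"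
  proof (rule contour_integral_diff)
    show "(\<lambda>\<zeta>. f \<zeta> * q \<zeta> * \<zeta>^(i-1) / ?P \<zeta>) contour_integrable_on ?g"
      by (rule IC_integrable[OF _ R]) (intro holomorphic_intros f q)
    show "(\<lambda>\<zeta>. f \<zeta> * W \<zeta>) contour_integrable_on ?g"
      by (rule contour_integrable_holomorphic_simple[of _ UNIV]) (auto intro: holomorphic_intros f W)
  qed
  also have "contour_integral ?g (\<lambda>\<zeta>. f \<zeta> * W \<zeta>) = 0"
    by (rule contour_integral_unique, rule Cauchy_theorem_convex_simple[of _ UNIV]) (auto intro: holomorphic_intros f W)
  finally show ?thesis unfolding IC_def by simp
qed

definition Phi :: "nat \<Rightarrow> (complex \<Rightarrow> complex) \<Rightarrow> (nat \<Rightarrow> complex) \<Rightarrow> nat \<Rightarrow> complex" where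
  "Phi k f s i = IC k (\<lambda>\<zeta>. f \<zeta> * \<zeta>^(i-1)) s (Rb k s) / (2 * pi * \<i>)"

lemma mvec_div: "mvec k M (\<lambda>l. X l / c) i = mvec k M X i / c"
  unfolding mvec_def by (simp add: sum_divide_distrib)

lemma Phi_pow:
  assumes k: "k \<ge> 2" and f: "f holomorphic_on UNIV" and i: "i \<in> {1..k}"
  shows "mvec k (mpow k (Acomp k s) n) (Phi k f s) i = Phi k (\<lambda>\<zeta>. f \<zeta> * \<zeta>^n) s i"
proof -
  obtain W where W: "\<And>n l. W n l holomorphic_on UNIV"
    "\<And>n z i. i \<in> {1..k} \<Longrightarrow> mvec k (mpow k (Acomp k s) n) (\<lambda>l. z^(l-1)) i = z^n * z^(i-1) - poly (Ppoly k s) z * W n i z"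
    using powA_Ev_all[OF k] by blast
  have R: "\<And>z. poly (Ppoly k s) z = 0 \<Longrightarrow> cmod z < Rb k s" using k by (intro root_bound) auto
  have "mvec k (mpow k (Acomp k s) n) (\<lambda>l. IC k (\<lambda>\<zeta>. f \<zeta> * \<zeta>^(l-1)) s (Rb k s)) i
      = IC k (\<lambda>\<zeta>. f \<zeta> * \<zeta>^n * \<zeta>^(i-1)) s (Rb k s)"
    by (rule mvec_IC[OF f _ W(1)[of n i] _ R]) (use W(2)[OF i] in \<open>auto intro: holomorphic_intros simp: mvec_def\<close>)
  then show ?thesis unfolding Phi_def[abs_def] mvec_div by simp
qed

lemma PsiF_eq:
  assumes k: "k \<ge> 2" and f: "f holomorphic_on UNIV" and i: "i \<in> {1..k}"
  shows "PsiF k f s i = mvec k (PderA k s) (Phi k f s) i"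
proof -
  obtain W where W: "\<And>l. W l holomorphic_on UNIV"
    "\<And>z i. i \<in> {1..k} \<Longrightarrow> mvec k (PderA k s) (\<lambda>l. z^(l-1)) i = Pder k s z * z^(i-1) - poly (Ppoly k s) z * W i z"
    using PderA_Ev[OF k] by blast
  have R: "\<And>z. poly (Ppoly k s) z = 0 \<Longrightarrow> cmod z < Rb k s" using k by (intro root_bound) auto
  have Pd: "Pder k s holomorphic_on UNIV"
  proof -
    have "Pder k s = (\<lambda>z. poly (pderiv (Ppoly k s)) z)" by (intro ext) (simp add: Pder_poly)
    then show ?thesis by (simp add: holomorphic_intros)
  qed
  have "mvec k (PderA k s) (\<lambda>l. IC k (\<lambda>\<zeta>. f \<zeta> * \<zeta>^(l-1)) s (Rb k s)) i
      = IC k (\<lambda>\<zeta>. f \<zeta> * Pder k s \<zeta> * \<zeta>^(i-1)) s (Rb k s)"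
    by (rule mvec_IC[OF f Pd W(1)[of i] _ R]) (use W(2)[OF i] in \<open>simp add: mvec_def\<close>)
  then have M: "mvec k (PderA k s) (Phi k f s) i = IC k (\<lambda>\<zeta>. f \<zeta> * Pder k s \<zeta> * \<zeta>^(i-1)) s (Rb k s) / (2 * pi * \<i>)"
    unfolding Phi_def[abs_def] mvec_div by simp
  define R0 where "R0 = (SOME R. R > 0 \<and> (\<forall>z. poly (Ppoly k s) z = 0 \<longrightarrow> cmod z < R))"
  have "\<exists>R. R > 0 \<and> (\<forall>z. poly (Ppoly k s) z = 0 \<longrightarrow> cmod z < R)"
    using R Rb_ge1[of k s] by (intro exI[of _ "Rb k s"]) auto
  then have R0: "R0 > 0 \<and> (\<forall>z. poly (Ppoly k s) z = 0 \<longrightarrow> cmod z < R0)"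
    unfolding R0_def by (rule someI_ex)
  have "PsiF k f s i = IC k (\<lambda>\<zeta>. f \<zeta> * \<zeta>^(i-1) * Pder k s \<zeta>) s R0 / (2 * pi * \<i>)"
    unfolding PsiF_def IC_def R0_def ..
  also have "IC k (\<lambda>\<zeta>. f \<zeta> * \<zeta>^(i-1) * Pder k s \<zeta>) s R0 = IC k (\<lambda>\<zeta>. f \<zeta> * \<zeta>^(i-1) * Pder k s \<zeta>) s (Rb k s)"
    by (rule IC_indep) (use R0 R in \<open>auto intro!: holomorphic_intros f Pd\<close>)
  also have "(\<lambda>\<zeta>. f \<zeta> * \<zeta>^(i-1) * Pder k s \<zeta>) = (\<lambda>\<zeta>. f \<zeta> * Pder k s \<zeta> * \<zeta>^(i-1))" by (simp add: mult_ac)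
  finally show ?thesis using M by simp
qed

lemma Pline:
  assumes h: "h \<in> {1..k}"
  shows "poly (Ppoly k (s(h:=t))) \<zeta> = poly (Ppoly k s) \<zeta> + (t - s h) * ((-1)^h * \<zeta>^(k-h))"
proof -
  have "poly (Ppoly k (s(h:=t))) \<zeta> = (\<Sum>m\<le>k. (-1)^m * scoef s m * \<zeta>^(k-m)
      + (if m = h then (t - s h) * ((-1)^h * \<zeta>^(k-h)) else 0))"
    unfolding poly_Ppoly by (intro sum.cong refl) (use h in \<open>auto simp: scoef_def algebra_simps\<close>)
  also have "\<dots> = poly (Ppoly k s) \<zeta> + (t - s h) * ((-1)^h * \<zeta>^(k-h))"
    using h by (simp add: sum.distrib poly_Ppoly)
  finally show ?thesis .
qed

lemma Rb_line:
  assumes h: "h \<in> {1..k}" and t: "cmod (t - s h) < 1"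
  shows "Rb k (s(h:=t)) < Rb k s + 1"
proof -
  have "Rb k (s(h:=t)) \<le> 1 + (\<Sum>m\<in>{1..k}. cmod (s m) + (if m = h then cmod (t - s h) else 0))"
    unfolding Rb_def
  proof (intro add_left_mono sum_mono)
    fix m assume "m \<in> {1..k}"
    show "cmod ((s(h:=t)) m) \<le> cmod (s m) + (if m = h then cmod (t - s h) else 0)"
    proof (cases "m = h")
      case True
      have "cmod t = cmod (s h + (t - s h))" by simp
      also have "\<dots> \<le> cmod (s h) + cmod (t - s h)" by (rule norm_triangle_ineq)
      finally show ?thesis using True by simp
    qed simp
  qed
  also have "\<dots> = Rb k s + cmod (t - s h)" using h by (simp add: sum.distrib Rb_def)
  finally show ?thesis using t by simp
qed

lemma circ_eq: "circlepath 0 R = (\<lambda>x. complex_of_real R * exp (2 * complex_of_real pi * \<i> * complex_of_real x))"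
  by (simp add: circlepath)

lemma circ_vd: "vector_derivative (circlepath 0 R) (at x) = 2 * complex_of_real pi * \<i> * complex_of_real R * exp (2 * complex_of_real pi * \<i> * complex_of_real x)"
  by (simp add: vector_derivative_circlepath)

lemma circ_norm:
  assumes "x \<in> {0..1}" "R \<ge> 0"
  shows "cmod (circlepath 0 R x) = R"
proof -
  have "circlepath 0 R x \<in> path_image (circlepath 0 R)" using assms unfolding path_image_def by auto
  then show ?thesis using assms by (simp add: dist_norm)
qed

definition JJ :: "nat \<Rightarrow> (complex \<Rightarrow> complex) \<Rightarrow> (nat \<Rightarrow> complex) \<Rightarrow> complex" where
  "JJ k g s = contour_integral (circlepath 0 (Rb k s + 1)) (\<lambda>\<zeta>. g \<zeta> / (poly (Ppoly k s) \<zeta>)^2)"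

lemma cont_circ: "continuous_on S (\<lambda>x. circlepath 0 R x)"
  unfolding circ_eq by (intro continuous_intros)

lemma IC_line_deriv:
  assumes k: "k \<ge> 1" and g: "g holomorphic_on UNIV" and h: "h \<in> {1..k}"
  shows "((\<lambda>t. IC k g (s(h:=t)) (Rb k s + 1)) has_field_derivative ((-1)^(Suc h) * JJ k (\<lambda>\<zeta>. g \<zeta> * \<zeta>^(k-h)) s)) (at (s h))"
proof -
  define R1 where "R1 = Rb k s + 1"
  define \<gamma> where "\<gamma> = circlepath 0 R1"
  define \<gamma>' where "\<gamma>' = (\<lambda>x. vector_derivative \<gamma> (at x))"
  define c where "c = (\<lambda>\<zeta>::complex. (-1)^h * \<zeta>^(k-h))"
  define P where "P = (\<lambda>\<zeta>. poly (Ppoly k s) \<zeta>)"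
  define pl where "pl = (\<lambda>t \<zeta>. P \<zeta> + (t - s h) * c \<zeta>)"
  define U where "U = ball (s h) (1::real)"
  have gc: "continuous_on UNIV g" using g holomorphic_on_imp_continuous_on by blast
  have R1pos: "R1 \<ge> 0" using Rb_ge1[of k s] unfolding R1_def by simp
  have gnorm: "\<And>x. x \<in> {0..1} \<Longrightarrow> cmod (\<gamma> x) = R1" unfolding \<gamma>_def using R1pos by (intro circ_norm) auto
  have plP: "\<And>t \<zeta>. pl t \<zeta> = poly (Ppoly k (s(h:=t))) \<zeta>" unfolding pl_def P_def c_def by (simp add: Pline[OF h])
  have nz: "\<And>t x. t \<in> U \<Longrightarrow> x \<in> {0..1} \<Longrightarrow> pl t (\<gamma> x) \<noteq> 0"
  proof
    fix t x assume t: "t \<in> U" and x: "x \<in> {0..1}" and z: "pl t (\<gamma> x) = 0"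
    have "cmod (\<gamma> x) < Rb k (s(h:=t))" using z plP k by (intro root_bound) auto
    also have "\<dots> < R1" unfolding R1_def using t by (intro Rb_line[OF h]) (auto simp: U_def dist_norm norm_minus_commute)
    finally show False using gnorm[OF x] by simp
  qed
  have nzP: "\<And>x. x \<in> {0..1} \<Longrightarrow> P (\<gamma> x) \<noteq> 0"
    using nz[of "s h"] by (simp add: U_def pl_def)
  define F where "F = (\<lambda>t x. g (\<gamma> x) / pl t (\<gamma> x) * \<gamma>' x)"
  define Fx where "Fx = (\<lambda>t x. (0 * pl t (\<gamma> x) - g (\<gamma> x) * c (\<gamma> x)) / (pl t (\<gamma> x) * pl t (\<gamma> x)) * \<gamma>' x)"
  have eqIC: "IC k g (s(h:=t)) R1 = integral (cbox 0 1) (F t)" for t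
    unfolding IC_def F_def contour_integral_integral \<gamma>_def \<gamma>'_def plP by (simp add: cbox_interval)
  have dpl: "((\<lambda>t. pl t \<zeta>) has_field_derivative c \<zeta>) (at t within U)" for t \<zeta>
    unfolding pl_def by (auto intro!: derivative_eq_intros)
  have D: "((\<lambda>t. F t x) has_field_derivative Fx t x) (at t within U)" if "t \<in> U" "x \<in> cbox 0 1" for t x
    unfolding F_def Fx_def
    by (rule DERIV_cmult_right, rule DERIV_divide[OF DERIV_const dpl]) (use nz that in \<open>auto simp: cbox_interval\<close>)
  have \<gamma>c: "continuous_on S \<gamma>" for S unfolding \<gamma>_def by (rule cont_circ)
  have \<gamma>'c: "continuous_on S \<gamma>'" for S unfolding \<gamma>'_def \<gamma>_def circ_vd by (intro continuous_intros)
  have gg: "continuous_on S (\<lambda>x. g (\<gamma> x))" for S by (rule continuous_on_compose2[OF gc \<gamma>c]) auto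
  have Pc: "continuous_on S (\<lambda>x. P (\<gamma> x))" for S unfolding P_def by (intro continuous_intros \<gamma>c)
  have cc: "continuous_on S (\<lambda>x. c (\<gamma> x))" for S unfolding c_def by (intro continuous_intros \<gamma>c)
  have I: "F t integrable_on cbox 0 1" if t: "t \<in> U" for t
  proof -
    have "continuous_on {0..1} (F t)"
      unfolding F_def pl_def using nz[OF t]
      by (intro continuous_intros gg Pc cc \<gamma>'c) (auto simp: pl_def)
    then show ?thesis by (simp add: cbox_interval integrable_continuous_interval)
  qed
  have C: "continuous_on (U \<times> cbox (0::real) 1) (\<lambda>(t, x). Fx t x)"
  proof -
    have e: "(\<lambda>(t, x). Fx t x) = (\<lambda>p. Fx (fst p) (snd p))" by (auto simp: fun_eq_iff)
    have g2: "continuous_on (U \<times> cbox (0::real) 1) (\<lambda>p. g (\<gamma> (snd p)))"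
      by (rule continuous_on_compose2[OF gg continuous_on_snd]) auto
    have P2: "continuous_on (U \<times> cbox (0::real) 1) (\<lambda>p. P (\<gamma> (snd p)))"
      by (rule continuous_on_compose2[OF Pc continuous_on_snd]) auto
    have c2: "continuous_on (U \<times> cbox (0::real) 1) (\<lambda>p. c (\<gamma> (snd p)))"
      by (rule continuous_on_compose2[OF cc continuous_on_snd]) auto
    have d2: "continuous_on (U \<times> cbox (0::real) 1) (\<lambda>p. \<gamma>' (snd p))"
      by (rule continuous_on_compose2[OF \<gamma>'c continuous_on_snd]) auto
    have pl2: "continuous_on (U \<times> cbox (0::real) 1) (\<lambda>p. P (\<gamma> (snd p)) + (fst p - s h) * c (\<gamma> (snd p)))"
      by (intro continuous_on_add continuous_on_mult continuous_on_diff continuous_on_fst continuous_on_id continuous_on_const P2 c2)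
    have nz2: "\<forall>p\<in>U \<times> cbox (0::real) 1. (P (\<gamma> (snd p)) + (fst p - s h) * c (\<gamma> (snd p))) * (P (\<gamma> (snd p)) + (fst p - s h) * c (\<gamma> (snd p))) \<noteq> 0"
    proof
      fix p assume "p \<in> U \<times> cbox (0::real) 1"
      then have "fst p \<in> U" "snd p \<in> {0..1}" by (auto simp: cbox_interval)
      then show "(P (\<gamma> (snd p)) + (fst p - s h) * c (\<gamma> (snd p))) * (P (\<gamma> (snd p)) + (fst p - s h) * c (\<gamma> (snd p))) \<noteq> 0"
        using nz[of "fst p" "snd p"] by (simp add: pl_def)
    qed
    have num: "continuous_on (U \<times> cbox (0::real) 1) (\<lambda>p. 0 * (P (\<gamma> (snd p)) + (fst p - s h) * c (\<gamma> (snd p))) - g (\<gamma> (snd p)) * c (\<gamma> (snd p)))"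
      by (intro continuous_on_diff continuous_on_mult continuous_on_const pl2 g2 c2)
    show ?thesis unfolding e unfolding Fx_def pl_def
      by (intro continuous_on_mult[OF continuous_on_divide[OF num continuous_on_mult[OF pl2 pl2] nz2] d2])
  qed
  have L: "((\<lambda>t. integral (cbox 0 1) (F t)) has_field_derivative integral (cbox 0 1) (Fx (s h))) (at (s h) within U)"
    by (rule leibniz_rule_field_derivative[where f=F and fx=Fx and U=U and a=0 and b=1, OF D I C]) (simp_all add: U_def)
  then have L': "((\<lambda>t. integral (cbox 0 1) (F t)) has_field_derivative integral (cbox 0 1) (Fx (s h))) (at (s h))"
    using at_within_open[of "s h" U] by (simp add: U_def)
  have "integral (cbox 0 1) (Fx (s h)) = contour_integral \<gamma> (\<lambda>\<zeta>. (0 * P \<zeta> - g \<zeta> * c \<zeta>) / (P \<zeta> * P \<zeta>))"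
    unfolding Fx_def contour_integral_integral \<gamma>'_def by (simp add: cbox_interval pl_def)
  also have "\<dots> = contour_integral \<gamma> (\<lambda>\<zeta>. (-1)^(Suc h) * (g \<zeta> * \<zeta>^(k-h) / (P \<zeta>)^2))"
    by (intro contour_integral_cong refl) (simp add: c_def power2_eq_square)
  also have "\<dots> = (-1)^(Suc h) * contour_integral \<gamma> (\<lambda>\<zeta>. g \<zeta> * \<zeta>^(k-h) / (P \<zeta>)^2)"
  proof (rule contour_integral_lmul)
    show "(\<lambda>\<zeta>. g \<zeta> * \<zeta>^(k-h) / (P \<zeta>)^2) contour_integrable_on \<gamma>"
    proof (rule contour_integrable_holomorphic_simple)
      show "(\<lambda>\<zeta>. g \<zeta> * \<zeta>^(k-h) / (P \<zeta>)^2) holomorphic_on - {z. P z = 0}"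
        unfolding P_def by (intro holomorphic_intros holomorphic_on_subset[OF g]) auto
      show "open (- {z. P z = 0})" unfolding P_def using roots_finite finite_imp_closed by blast
      show "path_image \<gamma> \<subseteq> - {z. P z = 0}" using nzP unfolding path_image_def by auto
    qed (simp add: \<gamma>_def)
  qed
  also have "\<dots> = (-1)^(Suc h) * JJ k (\<lambda>\<zeta>. g \<zeta> * \<zeta>^(k-h)) s"
    unfolding JJ_def \<gamma>_def R1_def P_def ..
  finally have "integral (cbox 0 1) (Fx (s h)) = (-1)^(Suc h) * JJ k (\<lambda>\<zeta>. g \<zeta> * \<zeta>^(k-h)) s" .
  moreover have "(\<lambda>t. IC k g (s(h:=t)) (Rb k s + 1)) = (\<lambda>t. integral (cbox 0 1) (F t))"
    using eqIC unfolding R1_def by (intro ext) simp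
  ultimately show ?thesis using L' by simp
qed

lemma cont_fstm: "continuous_on S (\<lambda>p. (fst p :: nat \<Rightarrow> complex) m)"
  by (rule continuous_on_compose2[OF continuous_on_product_coordinates continuous_on_fst[OF continuous_on_id]]) auto

lemma IC_cont:
  assumes k: "k \<ge> 1" and g: "g holomorphic_on UNIV"
  shows "continuous_on {s'. Rb k s' < R} (\<lambda>s'. IC k g s' R)"
proof -
  define N where "N = {s'. Rb k s' < R}"
  define \<gamma> where "\<gamma> = circlepath 0 R"
  define \<gamma>' where "\<gamma>' = (\<lambda>x. vector_derivative \<gamma> (at x))"
  have gc: "continuous_on UNIV g" using g holomorphic_on_imp_continuous_on by blast
  have eq: "\<And>s'. IC k g s' R = integral (cbox 0 1) (\<lambda>x. g (\<gamma> x) / poly (Ppoly k s') (\<gamma> x) * \<gamma>' x)"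
    unfolding IC_def contour_integral_integral \<gamma>_def \<gamma>'_def by (simp add: cbox_interval)
  have \<gamma>2: "continuous_on (N \<times> cbox (0::real) 1) (\<lambda>p. \<gamma> (snd p))"
    unfolding \<gamma>_def by (rule continuous_on_compose2[OF cont_circ continuous_on_snd[OF continuous_on_id]]) auto
  have g2: "continuous_on (N \<times> cbox (0::real) 1) (\<lambda>p. g (\<gamma> (snd p)))"
    by (rule continuous_on_compose2[OF gc \<gamma>2]) auto
  have d2: "continuous_on (N \<times> cbox (0::real) 1) (\<lambda>p. \<gamma>' (snd p))"
  proof -
    have "continuous_on UNIV \<gamma>'" unfolding \<gamma>'_def \<gamma>_def circ_vd by (intro continuous_intros)
    then show ?thesis by (rule continuous_on_compose2[OF _ continuous_on_snd[OF continuous_on_id]]) auto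
  qed
  have Qe: "(\<lambda>p. poly (Ppoly k (fst p)) (\<gamma> (snd p))) = (\<lambda>p. (\<gamma> (snd p))^k + (\<Sum>h=1..k. (-1)^h * fst p h * (\<gamma> (snd p))^(k-h)))"
    by (intro ext) (simp add: poly_Ppoly_split)
  have Q: "continuous_on (N \<times> cbox (0::real) 1) (\<lambda>p. poly (Ppoly k (fst p)) (\<gamma> (snd p)))"
    unfolding Qe by (intro continuous_on_add continuous_on_power continuous_on_sum continuous_on_mult continuous_on_const \<gamma>2 cont_fstm)
  have nz: "\<forall>p\<in>N \<times> cbox (0::real) 1. poly (Ppoly k (fst p)) (\<gamma> (snd p)) \<noteq> 0"
  proof
    fix p :: "(nat \<Rightarrow> complex) \<times> real" assume p: "p \<in> N \<times> cbox 0 1"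
    then have Rb: "Rb k (fst p) < R" and x: "snd p \<in> {0..1}" by (auto simp: N_def cbox_interval)
    have R0: "R \<ge> 0" using Rb Rb_ge1[of k "fst p"] by simp
    show "poly (Ppoly k (fst p)) (\<gamma> (snd p)) \<noteq> 0"
    proof
      assume "poly (Ppoly k (fst p)) (\<gamma> (snd p)) = 0"
      then have "cmod (\<gamma> (snd p)) < Rb k (fst p)" using k by (intro root_bound) auto
      moreover have "cmod (\<gamma> (snd p)) = R" unfolding \<gamma>_def using x R0 by (rule circ_norm)
      ultimately show False using Rb by simp
    qed
  qed
  have C: "continuous_on (N \<times> cbox (0::real) 1) (\<lambda>(s', x). g (\<gamma> x) / poly (Ppoly k s') (\<gamma> x) * \<gamma>' x)"
  proof -
    have e: "(\<lambda>(s', x). g (\<gamma> x) / poly (Ppoly k s') (\<gamma> x) * \<gamma>' x) = (\<lambda>p. g (\<gamma> (snd p)) / poly (Ppoly k (fst p)) (\<gamma> (snd p)) * \<gamma>' (snd p))"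
      by (auto simp: fun_eq_iff)
    show ?thesis unfolding e by (rule continuous_on_mult[OF continuous_on_divide[OF g2 Q nz] d2])
  qed
  show ?thesis unfolding eq N_def[symmetric] by (rule integral_continuous_on_param[OF C])
qed

lemma Rb_cont: "continuous_on UNIV (Rb k)"
proof -
  have "Rb k = (\<lambda>s. 1 + (\<Sum>h\<in>{1..k}. cmod (s h)))" by (intro ext) (simp add: Rb_def)
  then show ?thesis by (simp add: continuous_intros)
qed

lemma Phi_local:
  assumes k: "k \<ge> 1" and f: "f holomorphic_on UNIV" and R: "Rb k s < R"
  shows "Phi k f s i = IC k (\<lambda>\<zeta>. f \<zeta> * \<zeta>^(i-1)) s R / (2 * pi * \<i>)"
proof -
  have r: "\<And>z. poly (Ppoly k s) z = 0 \<Longrightarrow> cmod z < Rb k s" using k by (intro root_bound) auto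
  have "IC k (\<lambda>\<zeta>. f \<zeta> * \<zeta>^(i-1)) s (Rb k s) = IC k (\<lambda>\<zeta>. f \<zeta> * \<zeta>^(i-1)) s R"
  proof (rule IC_indep[OF _ r])
    show "\<And>z. poly (Ppoly k s) z = 0 \<Longrightarrow> cmod z < R" using r R by (meson less_trans)
  qed (auto intro!: holomorphic_intros f)
  then show ?thesis by (simp add: Phi_def)
qed

lemma Phi_cont:
  assumes k: "k \<ge> 1" and f: "f holomorphic_on UNIV"
  shows "continuous_on UNIV (\<lambda>s. Phi k f s i)"
proof (rule continuous_at_imp_continuous_on, intro ballI)
  fix s0 :: "nat \<Rightarrow> complex"
  define R where "R = Rb k s0 + 1"
  define N where "N = {s'. Rb k s' < R}"
  define G where "G = (\<lambda>s'. IC k (\<lambda>\<zeta>. f \<zeta> * \<zeta>^(i-1)) s' R / (2 * pi * \<i>))"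
  have oN: "open N" unfolding N_def by (rule open_Collect_less[OF Rb_cont continuous_on_const])
  have s0: "s0 \<in> N" unfolding N_def R_def by simp
  have "continuous_on N G" unfolding G_def N_def
    by (intro continuous_on_divide continuous_on_const IC_cont[OF k]) (auto intro!: holomorphic_intros f)
  then have cG: "isCont G s0" using continuous_on_eq_continuous_at[OF oN] s0 by blast
  have ev: "\<forall>\<^sub>F s' in nhds s0. Phi k f s' i = G s'"
    using eventually_nhds_in_open[OF oN s0] by eventually_elim (simp add: G_def N_def Phi_local[OF k f])
  show "isCont (\<lambda>s. Phi k f s i) s0" using cG isCont_cong[OF ev] by simp
qed

lemma Phi_deriv:
  assumes k: "k \<ge> 1" and f: "f holomorphic_on UNIV" and h: "h \<in> {1..k}"
  shows "((\<lambda>t. Phi k f (s(h:=t)) i) has_field_derivative ((-1)^(Suc h) * JJ k (\<lambda>\<zeta>. f \<zeta> * \<zeta>^(i-1) * \<zeta>^(k-h)) s / (2 * pi * \<i>))) (at (s h))"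
proof -
  let ?g = "\<lambda>\<zeta>. f \<zeta> * \<zeta>^(i-1)"
  have gh: "?g holomorphic_on UNIV" by (intro holomorphic_intros f)
  have D: "((\<lambda>t. IC k ?g (s(h:=t)) (Rb k s + 1) / (2 * pi * \<i>)) has_field_derivative
      ((-1)^(Suc h) * JJ k (\<lambda>\<zeta>. ?g \<zeta> * \<zeta>^(k-h)) s / (2 * pi * \<i>))) (at (s h))"
    by (rule DERIV_cdivide[OF IC_line_deriv[OF k gh h]])
  have ev: "\<forall>\<^sub>F t in nhds (s h). t \<in> UNIV \<longrightarrow> Phi k f (s(h:=t)) i = IC k ?g (s(h:=t)) (Rb k s + 1) / (2 * pi * \<i>)"
  proof -
    have "\<forall>\<^sub>F t in nhds (s h). t \<in> ball (s h) 1" by (rule eventually_nhds_in_open) auto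
    then show ?thesis
    proof eventually_elim
      case (elim t)
      then have "cmod (t - s h) < 1" by (simp add: dist_norm norm_minus_commute)
      then have "Rb k (s(h:=t)) < Rb k s + 1" by (rule Rb_line[OF h])
      then show ?case using Phi_local[OF k f] by simp
    qed
  qed
  show ?thesis using has_field_derivative_cong_ev[OF refl ev refl refl] D by simp
qed

lemma holo_Phi:
  assumes k: "k \<ge> 1" and f: "f holomorphic_on UNIV"
  shows "holo_k k U (\<lambda>s. Phi k f s i)"
  unfolding holo_k_def
proof (intro conjI ballI)
  show "continuous_on U (\<lambda>s. Phi k f s i)" using Phi_cont[OF k f] by (rule continuous_on_subset) simp
  fix s j assume "s \<in> U" "j \<in> {1..k}"
  then show "(\<lambda>t. Phi k f (s(j := t)) i) field_differentiable at (s j)"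
    using Phi_deriv[OF k f] unfolding field_differentiable_def by blast
qed

lemma pdiff_Phi:
  assumes k: "k \<ge> 1" and f: "f holomorphic_on UNIV" and h: "h \<in> {1..k}"
  shows "pdiff h (\<lambda>t. Phi k f t i) s = (-1)^(Suc h) * JJ k (\<lambda>\<zeta>. f \<zeta> * \<zeta>^(i-1) * \<zeta>^(k-h)) s / (2 * pi * \<i>)"
  by (rule pdiff_from) (rule Phi_deriv[OF k f h])

lemma sol_A_Phi:
  assumes k: "k \<ge> 2" and f: "f holomorphic_on UNIV"
  shows "sol_A k (Ck k - DiscSet k) (Phi k f)"
  unfolding sol_A_def
proof (intro conjI ballI)
  have k1: "k \<ge> 1" using k by simp
  show "admissible k (Ck k - DiscSet k)" by (rule admissible_main[OF k])
  show "\<And>i. i \<in> {1..k} \<Longrightarrow> holo_k k (Ck k - DiscSet k) (\<lambda>s. Phi k f s i)"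
    by (rule holo_Phi[OF k1 f])
  fix s h i assume s: "s \<in> Ck k - DiscSet k" and h: "h \<in> {1..k-1}" and i: "i \<in> {1..k}"
  have h1: "h \<in> {1..k}" and kk: "k \<in> {1..k}" using h k by auto
  have fh: "(\<lambda>\<zeta>. f \<zeta> * \<zeta>^(k-h)) holomorphic_on UNIV" by (intro holomorphic_intros f)
  have fe: "(\<lambda>t. mvec k (mpow k (Acomp k t) (k - h)) (Phi k f t) i) = (\<lambda>t. Phi k (\<lambda>\<zeta>. f \<zeta> * \<zeta>^(k-h)) t i)"
    by (intro ext Phi_pow[OF k f i])
  have JJe: "(\<lambda>\<zeta>. f \<zeta> * \<zeta>^(k-h) * \<zeta>^(i-1) * \<zeta>^(k-k)) = (\<lambda>\<zeta>. f \<zeta> * \<zeta>^(i-1) * \<zeta>^(k-h))"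
    by (intro ext) (simp add: mult_ac)
  have sgn: "(-1::complex)^(k+h) * (-1)^(Suc h) = (-1)^(Suc k)"
  proof -
    have "(-1::complex)^(k+h) * (-1)^(Suc h) = (-1)^(Suc k) * ((-1)^h * (-1)^h)" by (simp add: power_add mult_ac)
    then show ?thesis by (simp add: neg1_sq)
  qed
  show "(-1) ^ (k + h) * pdiff h (\<lambda>t. Phi k f t i) s = pdiff k (\<lambda>t. mvec k (mpow k (Acomp k t) (k - h)) (Phi k f t) i) s"
    unfolding fe pdiff_Phi[OF k1 f h1] pdiff_Phi[OF k1 fh kk] JJe using sgn by (simp add: mult.assoc[symmetric])
qed

lemma sol_AA_cong:
  assumes eq: "\<And>s i. i \<in> {1..k} \<Longrightarrow> \<Psi>' s i = \<Psi> s i" and sol: "sol_AA k U \<Psi>"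
  shows "sol_AA k U \<Psi>'"
proof -
  have e1: "\<And>i. i \<in> {1..k} \<Longrightarrow> (\<lambda>s. \<Psi>' s i) = (\<lambda>s. \<Psi> s i)" by (rule ext) (rule eq)
  have e2: "\<And>M t i. mvec k M (\<Psi>' t) i = mvec k M (\<Psi> t) i" by (rule mvec_cong[OF refl]) (rule eq)
  note U = sol_AA_facts(1)[OF sol] and hol = sol_AA_facts(2)[OF sol] and eqn = sol_AA_facts(3)[OF sol]
  show ?thesis unfolding sol_AA_def
  proof (intro conjI ballI)
    show "admissible k U" by (rule U)
    fix i assume i: "i \<in> {1..k}"
    show "holo_k k U (\<lambda>s. \<Psi>' s i)" unfolding e1[OF i] by (rule hol[OF i])
  next
    fix s h i assume s: "s \<in> U" and h: "h \<in> {1..k-1}" and i: "i \<in> {1..k}"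
    show "(-1) ^ (k + h) * pdiff h (\<lambda>t. \<Psi>' t i) s =
          pdiff k (\<lambda>t. mvec k (mpow k (Acomp k t) (k - h)) (\<Psi>' t) i) s
          + (-1) ^ k * of_nat (k - h) *
            mvec k (mmul k (mpow k (Acomp k s) (k - h - 1)) (minv k (PderA k s))) (\<Psi>' s) i"
      unfolding e1[OF i] e2 by (rule eqn[OF s h i])
  qed
qed

lemma part1:
  assumes k: "k \<ge> 2" and f: "f holomorphic_on UNIV"
  shows "sol_AA k (Ck k - DiscSet k) (PsiF k f)"
  by (rule sol_AA_cong[OF PsiF_eq[OF k f] part3[OF k sol_A_Phi[OF k f]]])

theorem mainTheorem7:
  fixes k :: nat
  assumes "k \<ge> 2"
  shows "(\<forall>s \<in> Ck k - DiscSet k. minvertible k (PderA k s))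
    \<and> (\<forall>f. f holomorphic_on UNIV \<longrightarrow> sol_AA k (Ck k - DiscSet k) (PsiF k f))
    \<and> (\<forall>U Psi. sol_AA k U Psi \<longrightarrow> sol_AA k U (\<lambda>s. mvec k (Acomp k s) (Psi s)))
    \<and> (\<forall>U Phi. sol_A k U Phi \<longrightarrow> sol_AA k U (\<lambda>s. mvec k (PderA k s) (Phi s)))
    \<and> (\<forall>Psi. sol_AA k (Ck k - DiscSet k) Psi \<longrightarrow>
          sol_A k (Ck k - DiscSet k) (\<lambda>s. mvec k (minv k (PderA k s)) (Psi s)))"
  using Ck_minus_Disc[OF assms] part1[OF assms] part2[OF assms] part3[OF assms] part4[OF assms] by blast

end
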